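(* Let $\widetilde M=(\mathbb{R}^2,dt^2+f(t)^2d\theta^2)$ be a non-compact model surface of revolution admitting a finite total curvature $c(\widetilde M)<2\pi$, and let $K(t):=-f''(t)/f(t)$. Then for every $\varepsilon>0$ there exists a non-compact model surface of revolution $\widetilde M_\varepsilon^+=(\mathbb{R}^2,dt^2+m_\varepsilon^+(t)^2d\theta^2)$, with radial curvature $G_\varepsilon^+(t):=-m_\varepsilon^{+\,\prime\prime}(t)/m_\varepsilon^+(t)$, admitting a finite total curvature, such that $G_\varepsilon^+\ge K$ on $[0,\infty)$, $\|G_\varepsilon^+-K\|_2:=\sqrt{\int_0^\infty|G_\varepsilon^+-K|^2dt}<\varepsilon$, $\limsup_{t\to\infty}G_\varepsilon^+(t)=+\infty$, and $|c(\widetilde M)-c(\widetilde M_\varepsilon^+)|<\varepsilon$.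
   Context: A non-compact model surface of revolution is $\mathbb{R}^2$ with the metric $dt^2+m(t)^2d\theta^2$, where $(t,\theta)$ are polar coordinates about the origin and $m:(0,\infty)\to(0,\infty)$ is smooth, extends to a smooth odd function around $0$, and satisfies $m'(0)=1$. Its Gauss (radial) curvature is $-m''(t)/m(t)$. The total curvature of such a surface with Gauss curvature $G$ is $c:=\int G_+\,dA+\int G_-\,dA$ with $G_+=\max\{G,0\}$, $G_-=\min\{G,0\}$ and $dA$ the area element; it is finite if both integrals are finite. *)

theory Defs
  imports "HOL-Analysis.Analysis"
begin

definition smooth_real :: "(real \<Rightarrow> real) \<Rightarrow> bool" where
  "smooth_real g \<longleftrightarrow> (\<forall>n::nat. \<forall>x::real. (deriv ^^ n) g differentiable (at x))"

text \<open>The function m on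
  (0,inf) is represented by its (unique) odd extension to the real line, which is smooth
  exactly when m is smooth on (0,inf) and extends to a smooth odd function around 0.\<close>
definition model_surface :: "(real \<Rightarrow> real) \<Rightarrow> bool" where
  "model_surface m \<longleftrightarrow> smooth_real m \<and> (\<forall>t. m (- t) = - m t) \<and> deriv m 0 = 1
     \<and> (\<forall>t>0. m t > 0)"

text \<open>Radial (Gauss) curvature -m''/m; at the origin it is the continuous extension,
  i.e. the limit of -m''(t)/m(t) as t tends to 0, which equals -m'''(0).\<close>
definition radial_curv :: "(real \<Rightarrow> real) \<Rightarrow> real \<Rightarrow> real" where
  "radial_curv m t = (if t = 0 then - (deriv ^^ 3) m 0
                      else - deriv (deriv m) t / m t)"

text \<open>Positive and negative parts of curvature integrated against the area element
  dA = m(t) dt d\<theta> over the plane (polar coordinates).\<close>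
definition finite_total_curvature :: "(real \<Rightarrow> real) \<Rightarrow> bool" where
  "finite_total_curvature m \<longleftrightarrow>
     set_integrable lborel {0<..} (\<lambda>t. max (radial_curv m t) 0 * m t) \<and>
     set_integrable lborel {0<..} (\<lambda>t. min (radial_curv m t) 0 * m t)"

definition total_curvature :: "(real \<Rightarrow> real) \<Rightarrow> real" where
  "total_curvature m =
     2 * pi * (LBINT t:{0<..}. max (radial_curv m t) 0 * m t)
   + 2 * pi * (LBINT t:{0<..}. min (radial_curv m t) 0 * m t)"

end

theory Submission
  imports Defs "HOL-Computational_Algebra.Polynomial"
begin


lemma rdiff_iff: "(f::real\<Rightarrow>real) differentiable at x \<longleftrightarrow> f field_differentiable at x"
  by (simp add: field_differentiable_def real_differentiable_def)

definition smk :: "real set \<Rightarrow> nat \<Rightarrow> (real\<Rightarrow>real) \<Rightarrow> bool" where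
  "smk S n f \<longleftrightarrow> (\<forall>k\<le>n. \<forall>x\<in>S. (deriv^^k) f differentiable (at x))"

lemma smk_0: "smk S 0 f \<longleftrightarrow> (\<forall>x\<in>S. f differentiable at x)"
  by (simp add: smk_def)

lemma smk_Suc: "smk S (Suc n) f \<longleftrightarrow> (\<forall>x\<in>S. f differentiable at x) \<and> smk S n (deriv f)"
proof -
  have "(\<forall>k\<le>Suc n. P k) \<longleftrightarrow> P 0 \<and> (\<forall>k\<le>n. P (Suc k))" for P
    by (metis Suc_le_mono not0_implies_Suc zero_le)
  then show ?thesis unfolding smk_def by (simp add: funpow_Suc_right del: funpow.simps)
qed

lemma deriv_iter_local:
  assumes "open S" "\<And>x. x \<in> S \<Longrightarrow> f x = g x" "x \<in> S"
  shows "(deriv^^k) f x = (deriv^^k) g x"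
  using assms(3)
proof (induction k arbitrary: x)
  case 0 then show ?case using assms by simp
next
  case (Suc k)
  have "eventually (\<lambda>y. y \<in> S) (nhds x)" using assms(1) Suc.prems by (rule eventually_nhds_in_open)
  then have ev: "eventually (\<lambda>y. (deriv^^k) f y = (deriv^^k) g y) (nhds x)"
    by (rule eventually_mono) (rule Suc.IH)
  show ?case using deriv_cong_ev[OF ev refl] by simp
qed

lemma differentiable_local:
  assumes "open S" "\<And>x. x \<in> S \<Longrightarrow> f x = g x" "x \<in> S" "f differentiable at x"
  shows "(g::real\<Rightarrow>real) differentiable at x"
  using assms has_field_derivative_transform_within_open unfolding real_differentiable_def
  by (metis at_within_open)

lemma smk_cong:
  assumes "open S" "\<And>x. x \<in> S \<Longrightarrow> f x = g x"
  shows "smk S n f \<longleftrightarrow> smk S n g"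
proof -
  have "(deriv^^k) f differentiable at x \<longleftrightarrow> (deriv^^k) g differentiable at x" if "x\<in>S" for k x
  proof -
    have e: "\<And>y. y\<in>S \<Longrightarrow> (deriv^^k) f y = (deriv^^k) g y" using deriv_iter_local[OF assms] .
    show ?thesis
    proof
      assume "(deriv^^k) f differentiable at x"
      then show "(deriv^^k) g differentiable at x"
        using differentiable_local[OF assms(1), of "(deriv^^k) f" "(deriv^^k) g" x] e that by blast
    next
      assume "(deriv^^k) g differentiable at x"
      then show "(deriv^^k) f differentiable at x"
        using differentiable_local[OF assms(1), of "(deriv^^k) g" "(deriv^^k) f" x] e that by metis
    qed
  qed
  then show ?thesis unfolding smk_def by blast
qed

lemma smk_mono: "smk S n f \<Longrightarrow> k \<le> n \<Longrightarrow> smk S k f"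
  by (simp add: smk_def)

lemma smk_diffD: assumes "smk S n f" "x \<in> S" shows "f differentiable at x"
proof -
  have "(deriv^^0) f differentiable at x" using assms unfolding smk_def by blast
  thus ?thesis by simp
qed

lemma smk_const: "smk S n (\<lambda>x. c)"
proof (induction n arbitrary: c)
  case 0 then show ?case by (simp add: smk_0)
next
  case (Suc n) then show ?case by (simp add: smk_Suc)
qed

lemma smk_id: "smk S n (\<lambda>x. x)"
  by (cases n) (simp_all add: smk_0 smk_Suc smk_const)

lemma smk_add:
  assumes "open S" "smk S n f" "smk S n g"
  shows "smk S n (\<lambda>x. f x + g x)"
  using assms(2,3)
proof (induction n arbitrary: f g)
  case 0 then show ?case by (auto simp: smk_0)
next
  case (Suc n)
  have d: "deriv (\<lambda>x. f x + g x) x = deriv f x + deriv g x" if "x\<in>S" for x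
    using Suc.prems that by (simp add: smk_Suc rdiff_iff)
  have "smk S n (\<lambda>x. deriv f x + deriv g x)" using Suc by (simp add: smk_Suc)
  then have "smk S n (deriv (\<lambda>x. f x + g x))"
    using smk_cong[OF assms(1), of "deriv (\<lambda>x. f x + g x)" "\<lambda>x. deriv f x + deriv g x" n] d by simp
  then show ?case using Suc.prems by (auto simp: smk_Suc)
qed

lemma smk_mult:
  assumes "open S" "smk S n f" "smk S n g"
  shows "smk S n (\<lambda>x. f x * g x)"
  using assms(2,3)
proof (induction n arbitrary: f g)
  case 0 then show ?case by (auto simp: smk_0)
next
  case (Suc n)
  have d: "deriv (\<lambda>x. f x * g x) x = f x * deriv g x + deriv f x * g x" if "x\<in>S" for x
    using Suc.prems that by (simp add: smk_Suc rdiff_iff)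
  have "smk S n f" "smk S n g" using Suc.prems smk_mono[of S "Suc n"] by auto
  then have "smk S n (\<lambda>x. f x * deriv g x + deriv f x * g x)" using Suc
    by (intro smk_add assms Suc.IH) (auto simp: smk_Suc)
  then have "smk S n (deriv (\<lambda>x. f x * g x))"
    using smk_cong[OF assms(1), of "deriv (\<lambda>x. f x * g x)" "\<lambda>x. f x * deriv g x + deriv f x * g x" n] d by simp
  then show ?case using Suc.prems by (auto simp: smk_Suc)
qed

lemma smk_cmult: "open S \<Longrightarrow> smk S n f \<Longrightarrow> smk S n (\<lambda>x. c * f x)"
  using smk_mult[OF _ smk_const] by blast

lemma smk_minus: "open S \<Longrightarrow> smk S n f \<Longrightarrow> smk S n (\<lambda>x. - f x)"
  using smk_cmult[of S n f "-1"] by simp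

lemma smk_diff: "open S \<Longrightarrow> smk S n f \<Longrightarrow> smk S n g \<Longrightarrow> smk S n (\<lambda>x. f x - g x)"
  using smk_add[OF _ _ smk_minus, of S n f g] by simp

lemma smk_comp:
  assumes "open S" "open T" "smk T n \<psi>" "smk S n p" "\<And>x. x \<in> S \<Longrightarrow> p x \<in> T"
  shows "smk S n (\<lambda>x. \<psi> (p x))"
  using assms(3,4)
proof (induction n arbitrary: \<psi>)
  case 0
  show ?case unfolding smk_0
  proof
    fix x assume x: "x \<in> S"
    have "p differentiable at x" using 0 x by (simp add: smk_0)
    moreover have "\<psi> differentiable at (p x)"
    proof -
      have px: "p x \<in> T" using assms(5) x .
      have "\<forall>y\<in>T. \<psi> differentiable at y" using 0 unfolding smk_0 by blast
      then show ?thesis using px by (rule bspec)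
    qed
    ultimately show "(\<lambda>x. \<psi> (p x)) differentiable at x"
      using differentiable_chain_at[of p x \<psi>] by (simp add: o_def)
  qed
next
  case (Suc n)
  have dp: "p differentiable at x" if "x \<in> S" for x using Suc.prems that by (simp add: smk_Suc)
  have dpsi: "\<psi> differentiable at (p x)" if "x \<in> S" for x using Suc.prems that assms(5) by (simp add: smk_Suc)
  have d: "deriv (\<lambda>x. \<psi> (p x)) x = deriv \<psi> (p x) * deriv p x" if "x\<in>S" for x
    using deriv_chain[of p x \<psi>] dp[OF that] dpsi[OF that] by (simp add: rdiff_iff o_def)
  have "smk S n (\<lambda>x. deriv \<psi> (p x))" using Suc smk_mono by (auto simp: smk_Suc)
  then have "smk S n (\<lambda>x. deriv \<psi> (p x) * deriv p x)" using Suc.prems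
    by (intro smk_mult assms) (auto simp: smk_Suc)
  then have "smk S n (deriv (\<lambda>x. \<psi> (p x)))"
    using smk_cong[OF assms(1), of "deriv (\<lambda>x. \<psi> (p x))" "\<lambda>x. deriv \<psi> (p x) * deriv p x" n] d by simp
  moreover have "(\<lambda>x. \<psi> (p x)) differentiable at x" if "x\<in>S" for x
    using differentiable_chain_at[OF dp[OF that] dpsi[OF that]] by (simp add: o_def)
  ultimately show ?case by (auto simp: smk_Suc)
qed

lemma smk_inverse_id: "smk (-{0}) n (\<lambda>y::real. inverse y)"
proof (induction n)
  case 0 then show ?case by (auto simp: smk_0 rdiff_iff intro!: derivative_intros)
next
  case (Suc n)
  have d: "deriv (\<lambda>y. inverse y) x = - (inverse x * inverse x)" if "x \<in> -{0}" for x::real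
    using that by (subst deriv_inverse) (auto simp: power2_eq_square field_simps)
  have "smk (-{0}) n (\<lambda>x. - (inverse x * inverse x))"
    using Suc by (intro smk_minus smk_mult) auto
  then have "smk (-{0}) n (deriv (\<lambda>y. inverse y))"
    using smk_cong[of "-{0}" "deriv (\<lambda>y. inverse y)" "\<lambda>x. - (inverse x * inverse x)" n] d by auto
  then show ?case by (auto simp: smk_Suc rdiff_iff intro!: derivative_intros)
qed

lemma smk_inverse:
  assumes "open S" "smk S n f" "\<And>x. x \<in> S \<Longrightarrow> f x \<noteq> 0"
  shows "smk S n (\<lambda>x. inverse (f x))"
  using smk_comp[OF assms(1) _ smk_inverse_id assms(2)] assms(3) by auto

lemma smk_exp: "smk S n (\<lambda>x::real. exp x)"
proof (induction n)
  case 0 then show ?case by (auto simp: smk_0) (meson DERIV_exp real_differentiable_def)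
next
  case (Suc n)
  have "deriv (\<lambda>x::real. exp x) = (\<lambda>x. exp x)" by (rule ext, rule DERIV_imp_deriv) (rule DERIV_exp)
  moreover have "(\<lambda>x::real. exp x) differentiable at x" for x
    by (meson DERIV_exp real_differentiable_def)
  ultimately show ?case using Suc by (auto simp: smk_Suc)
qed

lemma smk_local:
  assumes "\<And>x. x \<in> S \<Longrightarrow> \<exists>U. x \<in> U \<and> smk U n f"
  shows "smk S n f"
  using assms unfolding smk_def by fast

lemma smooth_real_iff: "smooth_real f \<longleftrightarrow> (\<forall>n. smk UNIV n f)"
  unfolding smooth_real_def smk_def by blast




definition FP :: "real poly \<Rightarrow> real \<Rightarrow> real" where
  "FP P x = (if x > 0 then poly P (1/x) * exp (-1/x) else 0)"

definition QP :: "real poly \<Rightarrow> real poly" where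
  "QP P = [:0,0,1:] * (P - pderiv P)"

lemma lim_poly_exp: fixes P :: "real poly" shows "((\<lambda>y. poly P y * exp (-y)) \<longlongrightarrow> 0) at_top"
proof -
  have "((\<lambda>y. \<Sum>i\<le>degree P. coeff P i * (y ^ i / exp y)) \<longlongrightarrow> 0) at_top"
    by (intro tendsto_null_sum tendsto_mult_right_zero tendsto_power_div_exp_0)
  moreover have "(\<Sum>i\<le>degree P. coeff P i * (y ^ i / exp y)) = poly P y * exp (-y)" for y
  proof -
    have "(\<Sum>i\<le>degree P. coeff P i * (y ^ i / exp y)) = (\<Sum>i\<le>degree P. coeff P i * y^i) * inverse (exp y)"
      by (simp add: sum_distrib_right divide_inverse mult.assoc)
    then show ?thesis by (simp add: poly_altdef exp_minus)
  qed
  ultimately show ?thesis by simp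
qed

lemma lim_FP_0: "((\<lambda>h. FP P h / h) \<longlongrightarrow> 0) (at 0)"
  unfolding filterlim_at_split
proof
  show "((\<lambda>h. FP P h / h) \<longlongrightarrow> 0) (at_left 0)"
  proof (rule Lim_transform_eventually)
    show "((\<lambda>h. 0::real) \<longlongrightarrow> 0) (at_left 0)" by simp
    show "\<forall>\<^sub>F x in at_left 0. 0 = FP P x / x"
      unfolding eventually_at_filter by (rule always_eventually) (simp add: FP_def)
  qed
  have "((\<lambda>h. poly ([:0,1:] * P) (inverse h) * exp (- inverse h)) \<longlongrightarrow> 0) (at_right 0)"
    using filterlim_compose[OF lim_poly_exp[of "[:0,1:] * P"] filterlim_inverse_at_top_right]
    by (simp add: mult.assoc)
  then show "((\<lambda>h. FP P h / h) \<longlongrightarrow> 0) (at_right 0)"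
  proof (rule Lim_transform_eventually)
    show "\<forall>\<^sub>F x in at_right 0. poly ([:0,1:] * P) (inverse x) * exp (- inverse x) = FP P x / x"
      using eventually_at_right_less[of "0::real"] by eventually_elim (simp add: FP_def field_simps)
  qed
qed

lemma FP_deriv: "(FP P has_real_derivative FP (QP P) x) (at x)"
proof (cases "x > 0")
  case True
  have d: "((\<lambda>y. poly P (1/y) * exp (-1/y)) has_real_derivative
      (poly (pderiv P) (1/x) * (- 1 / x^2)) * exp (-1/x) + poly P (1/x) * (exp (-1/x) * (1/x^2))) (at x)"
    using True
    by (auto intro!: derivative_eq_intros DERIV_chain2[OF poly_DERIV] simp: power2_eq_square)
  have e: "(poly (pderiv P) (1/x) * (- 1 / x^2)) * exp (-1/x) + poly P (1/x) * (exp (-1/x) * (1/x^2))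
      = FP (QP P) x"
    using True by (simp add: FP_def QP_def power2_eq_square field_simps)
  show ?thesis
    apply (rule has_field_derivative_transform_within_open[OF d[unfolded e], of "{0<..}"])
    using True by (auto simp: FP_def)
next
  case False
  show ?thesis
  proof (cases "x < 0")
    case True
    have "((\<lambda>y. 0) has_real_derivative 0) (at x)" by simp
    then have "(FP P has_real_derivative 0) (at x)"
      by (rule has_field_derivative_transform_within_open[of _ _ _ "{..<0}"])
         (use True in \<open>auto simp: FP_def\<close>)
    moreover have "FP (QP P) x = 0" using True by (simp add: FP_def)
    ultimately show ?thesis by simp
  next
    case False
    with \<open>\<not> x > 0\<close> have x: "x = 0" by simp
    have "((\<lambda>y. (FP P y - FP P 0) / (y - 0)) \<longlongrightarrow> 0) (at 0)"
      using lim_FP_0 by (simp add: FP_def)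
    then show ?thesis unfolding x has_field_derivative_iff by (simp add: FP_def)
  qed
qed

lemma deriv_FP: "deriv (FP P) = FP (QP P)"
  by (rule ext, rule DERIV_imp_deriv, rule FP_deriv)

lemma deriv_iter_FP: "(deriv^^n) (FP P) = FP ((QP^^n) P)"
  by (induction n) (simp_all add: deriv_FP)

lemma smk_FP: "smk S n (FP P)"
  unfolding smk_def deriv_iter_FP
  using FP_deriv real_differentiable_def by blast

definition psi :: "real \<Rightarrow> real" where "psi = FP 1"

lemma psi_simp: "psi x = (if x > 0 then exp (-1/x) else 0)"
  by (simp add: psi_def FP_def)

lemma smk_psi: "smk S n psi" by (simp add: psi_def smk_FP)

lemma psi_nonneg: "psi x \<ge> 0" by (simp add: psi_simp)
lemma psi_pos: "x > 0 \<Longrightarrow> psi x > 0" by (simp add: psi_simp)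
lemma psi_zero: "x \<le> 0 \<Longrightarrow> psi x = 0" by (simp add: psi_simp)

lemma psi_deriv: "(psi has_real_derivative deriv psi x) (at x)"
  by (simp add: psi_def FP_deriv deriv_FP)

lemma deriv_psi_nonneg: "deriv psi x \<ge> 0"
  by (simp add: psi_def deriv_FP FP_def QP_def)




definition Sst :: "real \<Rightarrow> real" where
  "Sst x = psi (1+x) / (psi (1+x) + psi (1-x))"

lemma D_pos: "psi (1+x) + psi (1-x) > 0"
proof (cases "x > -1")
  case True then show ?thesis using psi_pos[of "1+x"] psi_nonneg[of "1-x"] by simp
next
  case False then show ?thesis using psi_pos[of "1-x"] psi_nonneg[of "1+x"] by simp
qed

lemma deriv_affine: "deriv (\<lambda>x::real. a * x + b) = (\<lambda>x. a)"
  by (rule ext, rule DERIV_imp_deriv) (auto intro!: derivative_eq_intros)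

lemma smk_affine: "smk S n (\<lambda>x. a * x + b)"
proof (cases n)
  case 0 then show ?thesis by (auto simp: smk_0 intro!: derivative_intros)
next
  case (Suc k) then show ?thesis
    by (auto simp: smk_Suc deriv_affine smk_const intro!: derivative_intros)
qed

lemma smk_Sst: "smk UNIV n Sst"
proof -
  have p1: "smk UNIV n (\<lambda>x. psi (1*x+1))"
    by (rule smk_comp[OF open_UNIV open_UNIV smk_psi smk_affine]) auto
  have p2: "smk UNIV n (\<lambda>x. psi ((-1)*x+1))"
    by (rule smk_comp[OF open_UNIV open_UNIV smk_psi smk_affine]) auto
  have "smk UNIV n (\<lambda>x. psi (1*x+1) * inverse (psi (1*x+1) + psi ((-1)*x+1)))"
  proof (intro smk_mult smk_inverse smk_add p1 p2 open_UNIV)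
    fix x :: real
    have "psi (1*x+1) + psi ((-1)*x+1) = psi (1+x) + psi (1-x)" by (simp add: add.commute)
    then show "psi (1*x+1) + psi ((-1)*x+1) \<noteq> 0" using D_pos[of x] by simp
  qed
  moreover have "(\<lambda>x. psi (1*x+1) * inverse (psi (1*x+1) + psi ((-1)*x+1))) = Sst"
    by (rule ext) (simp add: Sst_def divide_inverse add.commute)
  ultimately show ?thesis by simp
qed

lemma Sst_low: "x \<le> -1 \<Longrightarrow> Sst x = 0" by (simp add: Sst_def psi_zero)
lemma Sst_high: "x \<ge> 1 \<Longrightarrow> Sst x = 1"
  using D_pos[of x] by (simp add: Sst_def psi_zero)
lemma Sst_nonneg: "Sst x \<ge> 0" using D_pos[of x] psi_nonneg by (simp add: Sst_def)
lemma Sst_le1: "Sst x \<le> 1" using D_pos[of x] psi_nonneg[of "1-x"] by (simp add: Sst_def)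

lemma deriv_psi_zero: "y \<le> 0 \<Longrightarrow> deriv psi y = 0"
  by (simp add: psi_def deriv_FP FP_def)

definition Sd :: "real \<Rightarrow> real" where
  "Sd x = (deriv psi (1+x) * psi (1-x) + psi (1+x) * deriv psi (1-x)) / (psi (1+x) + psi (1-x))^2"

lemma Sst_deriv: "(Sst has_real_derivative Sd x) (at x)"
proof -
  have a: "((\<lambda>x. psi (1+x)) has_real_derivative deriv psi (1+x)) (at x)"
  proof -
    have "((\<lambda>x. 1+x) has_real_derivative 1) (at x)" by (auto intro!: derivative_eq_intros)
    from DERIV_chain2[OF psi_deriv this] show ?thesis by simp
  qed
  have b: "((\<lambda>x. psi (1-x)) has_real_derivative - deriv psi (1-x)) (at x)"
  proof -
    have "((\<lambda>x. 1-x) has_real_derivative -1) (at x)" by (auto intro!: derivative_eq_intros)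
    from DERIV_chain2[OF psi_deriv this] show ?thesis by simp
  qed
  have "(Sst has_real_derivative
     (deriv psi (1+x) * (psi (1+x) + psi (1-x)) - psi (1+x) * (deriv psi (1+x) + - deriv psi (1-x)))
       / ((psi (1+x) + psi (1-x)) * (psi (1+x) + psi (1-x)))) (at x)"
    unfolding Sst_def[abs_def]
    by (rule DERIV_divide[OF a DERIV_add[OF a b]]) (use D_pos[of x] in simp)
  moreover have "(deriv psi (1+x) * (psi (1+x) + psi (1-x)) - psi (1+x) * (deriv psi (1+x) + - deriv psi (1-x)))
       / ((psi (1+x) + psi (1-x)) * (psi (1+x) + psi (1-x))) = Sd x"
    by (simp add: Sd_def power2_eq_square algebra_simps)
  ultimately show ?thesis by simp
qed

lemma deriv_Sst: "deriv Sst = Sd"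
  by (rule ext, rule DERIV_imp_deriv, rule Sst_deriv)

lemma Sd_nonneg: "Sd x \<ge> 0"
  unfolding Sd_def using deriv_psi_nonneg psi_nonneg
  by (intro divide_nonneg_nonneg add_nonneg_nonneg mult_nonneg_nonneg) auto

lemma Sd_zero: "\<bar>x\<bar> \<ge> 1 \<Longrightarrow> Sd x = 0"
  by (cases "x \<ge> 0") (auto simp: Sd_def psi_zero deriv_psi_zero)

lemma Sd_half: "\<exists>x0. \<bar>x0\<bar> < 1 \<and> Sd x0 = 1/2"
proof -
  obtain z where "-1 < z" "z < 1" "Sst 1 - Sst (-1) = (1 - -1) * Sd z"
    using MVT2[of "-1" 1 Sst Sd] Sst_deriv by auto
  then show ?thesis using Sst_high[of 1] Sst_low[of "-1"] by (intro exI[of _ z]) auto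
qed

lemma Sd_bound: "\<exists>M>0. \<forall>x. Sd x \<le> M"
proof -
  have "continuous_on {-1..1} Sd"
  proof -
    have "Sd differentiable at x" for x
      using smk_Sst[of "Suc 0"] unfolding smk_Suc deriv_Sst smk_0 by auto
    then show ?thesis
      by (meson continuous_at_imp_continuous_on differentiable_imp_continuous_within)
  qed
  then obtain y where "y \<in> {-1..1}" "\<forall>x\<in>{-1..1}. Sd x \<le> Sd y"
    using continuous_attains_sup[of "{-1..1::real}" Sd] by auto
  then show ?thesis
    apply (intro exI[of _ "Sd y + 1"])
    using Sd_zero Sd_nonneg by (smt (verit, best) atLeastAtMost_iff)
qed




lemma odd_deriv:
  fixes g :: "real \<Rightarrow> real"
  assumes "\<And>x. g (-x) = s * g x" "\<And>x. g differentiable at x"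
  shows "deriv g (-x) = - s * deriv g x"
proof -
  have "((\<lambda>x. g (-x)) has_real_derivative deriv g (-x) * (-1)) (at x)"
  proof -
    have "((\<lambda>x. -x) has_real_derivative -1) (at x)" by (auto intro!: derivative_eq_intros)
    moreover have "(g has_real_derivative deriv g (-x)) (at (-x))"
      using assms(2) by (simp add: DERIV_deriv_iff_real_differentiable)
    ultimately show ?thesis using DERIV_chain2 by blast
  qed
  moreover have "((\<lambda>x. s * g x) has_real_derivative s * deriv g x) (at x)"
    using assms(2) by (auto intro!: derivative_eq_intros simp: DERIV_deriv_iff_real_differentiable)
  ultimately show ?thesis unfolding assms(1) using DERIV_unique by fastforce
qed

locale mfs =
  fixes f :: "real \<Rightarrow> real"
  assumes ms: "model_surface f" and ftc: "finite_total_curvature f"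
    and tc: "total_curvature f < 2 * pi"
begin

abbreviation "K \<equiv> radial_curv f"

lemma smf: "smk UNIV n f" using ms unfolding model_surface_def smooth_real_iff by blast

lemma f_odd: "f (-t) = - f t" using ms unfolding model_surface_def by blast
lemma f_pos: "t > 0 \<Longrightarrow> f t > 0" using ms unfolding model_surface_def by blast
lemma f0: "f 0 = 0" using f_odd[of 0] by simp
lemma f1_0: "deriv f 0 = 1" using ms unfolding model_surface_def by blast

lemma df: "f differentiable at x" using smk_diffD[OF smf[of 0]] by simp
lemma ddf: "deriv f differentiable at x"
  using smf[of "Suc 0"] unfolding smk_Suc smk_0 by simp
lemma dddf: "deriv (deriv f) differentiable at x"
  using smf[of "Suc (Suc 0)"] unfolding smk_Suc smk_0 by simp

lemma f1_even: "deriv f (-x) = deriv f x"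
  using odd_deriv[of f "-1" x] f_odd df by simp
lemma f2_odd: "deriv (deriv f) (-x) = - deriv (deriv f) x"
  using odd_deriv[of "deriv f" 1 x] f1_even ddf by simp
lemma f2_0: "deriv (deriv f) 0 = 0" using f2_odd[of 0] by simp

lemma Kf: "t \<ge> 0 \<Longrightarrow> K t * f t = - deriv (deriv f) t"
  using f_pos[of t] by (cases "t = 0") (auto simp: radial_curv_def f0 f2_0)

lemma cont_f: "continuous_on A f"
  using df by (meson continuous_at_imp_continuous_on differentiable_imp_continuous_within)
lemma cont_f1: "continuous_on A (deriv f)"
  using ddf by (meson continuous_at_imp_continuous_on differentiable_imp_continuous_within)
lemma cont_f2: "continuous_on A (deriv (deriv f))"
  using dddf by (meson continuous_at_imp_continuous_on differentiable_imp_continuous_within)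

lemma f1_formula:
  assumes "t \<ge> 0"
  shows "deriv f t = 1 - integral {0..t} (\<lambda>s. K s * f s)"
proof -
  have "(deriv (deriv f) has_integral (deriv f t - deriv f 0)) {0..t}"
    apply (rule fundamental_theorem_of_calculus[OF assms])
    using ddf by (auto simp: has_real_derivative_iff_has_vector_derivative[symmetric]
        DERIV_deriv_iff_real_differentiable intro: has_field_derivative_at_within)
  then have "((\<lambda>s. - (K s * f s)) has_integral (deriv f t - 1)) {0..t}"
    using Kf f1_0 by (auto intro: has_integral_eq)
  then show ?thesis
  proof -
    assume h: "((\<lambda>s. - (K s * f s)) has_integral (deriv f t - 1)) {0..t}"
    have "((\<lambda>s. K s * f s) has_integral - (deriv f t - 1)) {0..t}"
      using has_integral_neg[OF h] by simp
    then have "integral {0..t} (\<lambda>s. K s * f s) = - (deriv f t - 1)" by (rule integral_unique)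
    then show ?thesis by simp
  qed
qed

lemma Kf_int0: "set_integrable lborel {0<..} (\<lambda>t. K t * f t)"
proof -
  have "set_integrable lborel {0<..} (\<lambda>t. max (K t) 0 * f t + min (K t) 0 * f t)"
    using ftc unfolding finite_total_curvature_def by (intro set_integral_add) auto
  moreover have "max (K t) 0 * f t + min (K t) 0 * f t = K t * f t" for t
    by (cases "K t \<ge> 0") (auto simp: max_def min_def algebra_simps)
  ultimately show ?thesis by simp
qed

lemma ind_eq: "indicator {0..} t * (K t * f t) = indicator {0<..} t * (K t * f t)"
  by (cases "t = 0") (auto simp: f0 indicator_def)

lemma Kf_int: "set_integrable lborel {0..} (\<lambda>t. K t * f t)"
  using Kf_int0 unfolding set_integrable_def by (simp add: ind_eq)

definition IK where "IK = (LBINT t:{0<..}. K t * f t)"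

lemma IK_eq: "IK = (LBINT t:{0..}. K t * f t)"
  unfolding IK_def set_lebesgue_integral_def by (simp add: ind_eq)

lemma tc_eq: "total_curvature f = 2 * pi * IK"
proof -
  have i: "set_integrable lborel {0<..} (\<lambda>t. max (K t) 0 * f t)"
        "set_integrable lborel {0<..} (\<lambda>t. min (K t) 0 * f t)"
    using ftc unfolding finite_total_curvature_def by auto
  have "max (K t) 0 * f t + min (K t) 0 * f t = K t * f t" for t
    by (cases "K t \<ge> 0") (auto simp: max_def min_def algebra_simps)
  then show ?thesis unfolding total_curvature_def IK_def
    using set_integral_add(2)[OF i] by (simp add: algebra_simps)
qed

lemma IK_lt1: "IK < 1" using tc tc_eq by simp

lemma f1_lim: "(deriv f \<longlongrightarrow> 1 - IK) at_top"
proof -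
  have "((\<lambda>b. LBINT t:{0..b}. K t * f t) \<longlongrightarrow> IK) at_top"
    unfolding IK_eq by (rule tendsto_set_lebesgue_integral_at_top[OF _ Kf_int]) auto
  moreover have "(LBINT t:{0..b}. K t * f t) = integral {0..b} (\<lambda>t. K t * f t)" for b
  proof -
    have "continuous_on {0..b} (\<lambda>t. - deriv (deriv f) t)"
      by (intro continuous_intros cont_f2)
    then have "set_integrable lborel {0..b} (\<lambda>t. - deriv (deriv f) t)"
      by (rule borel_integrable_atLeastAtMost')
    then have A: "integrable lborel (\<lambda>x. indicator {0..b} x *\<^sub>R - deriv (deriv f) x)"
      unfolding set_integrable_def .
    have "(\<lambda>x. indicator {0..b} x *\<^sub>R - deriv (deriv f) x) = (\<lambda>x. indicator {0..b} x *\<^sub>R (K x * f x))"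
      by (rule ext) (auto simp: Kf indicator_def)
    then have "set_integrable lborel {0..b} (\<lambda>t. K t * f t)"
      using A unfolding set_integrable_def by metis
    then show ?thesis by (rule set_borel_integral_eq_integral)
  qed
  ultimately have "((\<lambda>b. 1 - integral {0..b} (\<lambda>t. K t * f t)) \<longlongrightarrow> 1 - IK) at_top"
    by (intro tendsto_intros) simp
  then show ?thesis
    by (rule Lim_transform_eventually) (auto simp: eventually_at_top_linorder f1_formula intro!: exI[of _ 0])
qed

lemma f_grow: "\<exists>T\<ge>2. \<forall>s\<ge>T. deriv f s \<ge> (1 - IK) / 2"
proof -
  have "eventually (\<lambda>s. deriv f s > (1 - IK)/2) at_top"
    using order_tendstoD(1)[OF f1_lim, of "(1-IK)/2"] IK_lt1 by simp
  then obtain T where "\<forall>s\<ge>T. deriv f s > (1-IK)/2" by (auto simp: eventually_at_top_linorder)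
  then show ?thesis by (intro exI[of _ "max T 2"]) auto
qed

lemma f_lower: "\<exists>\<beta>>0. \<forall>s\<ge>2. f s \<ge> \<beta> * (s - 1)"
proof -
  define a where "a = (1 - IK)/2"
  have a: "a > 0" using IK_lt1 a_def by simp
  obtain T where T: "T \<ge> 2" "\<And>s. s \<ge> T \<Longrightarrow> deriv f s \<ge> a" using f_grow a_def by auto
  obtain y where y: "y \<in> {2..T+1}" "\<And>s. s\<in>{2..T+1} \<Longrightarrow> f y \<le> f s"
    using continuous_attains_inf[of "{2..T+1}" f] cont_f T by auto
  define \<mu> where "\<mu> = f y"
  have mu: "\<mu> > 0" using y f_pos by (auto simp: \<mu>_def)
  have grow: "f s \<ge> a * (s - T)" if "s \<ge> T" for s
  proof (cases "s = T")
    case True then show ?thesis using f_pos[of T] T by simp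
  next
    case False
    have Ts: "T < s" using that False by simp
    have "\<And>x. T \<le> x \<Longrightarrow> x \<le> s \<Longrightarrow> DERIV f x :> deriv f x"
      using df by (simp add: DERIV_deriv_iff_real_differentiable)
    then obtain z where "T < z" "z < s" "f s - f T = (s - T) * deriv f z"
      using MVT2[OF Ts] by blast
    moreover have "deriv f z \<ge> a" using T \<open>T < z\<close> by auto
    moreover have "f T > 0" using f_pos T by simp
    ultimately show ?thesis using \<open>s \<ge> T\<close>
      by (smt (verit, best) mult.commute mult_left_mono)
  qed
  define \<beta> where "\<beta> = min \<mu> a / T"
  have b: "\<beta> > 0" using mu a T by (simp add: \<beta>_def)
  have "f s \<ge> \<beta> * (s - 1)" if "s \<ge> 2" for s
  proof (cases "s \<le> T + 1")
    case True
    have "min \<mu> a / T \<le> \<mu> / T" using T by (simp add: divide_right_mono)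
    then have "\<beta> * (s - 1) \<le> (\<mu> / T) * T"
      unfolding \<beta>_def by (rule mult_mono) (use True that T mu in auto)
    also have "\<dots> = \<mu>" using T by simp
    also have "\<dots> \<le> f s" using y True that by (simp add: \<mu>_def)
    finally show ?thesis .
  next
    case False
    have "min \<mu> a / T \<le> a / T" using T by (simp add: divide_right_mono)
    then have "\<beta> * (s - 1) \<le> (a / T) * (s - 1)"
      unfolding \<beta>_def by (rule mult_right_mono) (use that in simp)
    also have "\<dots> \<le> a * (s - T)"
    proof -
      have "0 \<le> (T - 1) * (s - T - 1)" by (intro mult_nonneg_nonneg) (use False T in auto)
      then have "s - 1 \<le> T * (s - T)" by (simp add: algebra_simps)
      then have "(a / T) * (s - 1) \<le> (a / T) * (T * (s - T))"
        by (rule mult_left_mono) (use a T in simp)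
      also have "\<dots> = a * (s - T)" using T by simp
      finally show ?thesis .
    qed
    also have "\<dots> \<le> f s" using grow False by simp
    finally show ?thesis .
  qed
  then show ?thesis using b by blast
qed

end



lemma smk_sum:
  assumes "open S" "finite A" "\<And>k. k \<in> A \<Longrightarrow> smk S n (F k)"
  shows "smk S n (\<lambda>x. \<Sum>k\<in>A. F k x)"
  using assms(2,3)
proof (induction A rule: finite_induct)
  case empty then show ?case by (simp add: smk_const)
next
  case (insert a A) then show ?case by (simp add: smk_add assms(1))
qed

locale constr = mfs +
  fixes \<beta> \<eta> M x0 :: real and tk :: "nat \<Rightarrow> real"
  assumes beta: "\<beta> > 0" and flow: "\<And>s. s \<ge> 2 \<Longrightarrow> f s \<ge> \<beta> * (s - 1)"
    and eta: "0 < \<eta>" "\<eta> \<le> 1" "\<eta> \<le> \<beta>^2 / 4"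
    and Mb: "M > 0" "\<And>x. Sd x \<le> M"
    and x0: "\<bar>x0\<bar> < 1" "Sd x0 = 1/2"
    and tk0: "tk 0 \<ge> 3" and tkS: "\<And>k. tk (Suc k) \<ge> tk k + 2" and tkK: "\<And>k. K (tk k) > -1"
begin

lemma tk_ge: "tk k \<ge> 3 + 2 * real k"
  by (induction k) (use tk0 tkS in \<open>auto simp: algebra_simps\<close>, smt (verit) tkS)

lemma tk_mono: "j < k \<Longrightarrow> tk k \<ge> tk j + 2"
proof (induction k)
  case 0 then show ?case by simp
next
  case (Suc k)
  then show ?case using tkS[of k] by (cases "j = k") auto
qed

lemma tk_sep: "j \<noteq> k \<Longrightarrow> \<bar>tk j - tk k\<bar> \<ge> 2"
  by (cases "j < k") (use tk_mono[of j k] tk_mono[of k j] in auto)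

lemma f_ge_beta: assumes "s \<ge> 2" shows "f s \<ge> \<beta>"
proof -
  have "\<beta> * 1 \<le> \<beta> * (s - 1)" using assms beta by (intro mult_left_mono) auto
  then show ?thesis using flow[OF assms] by simp
qed

definition a :: "nat \<Rightarrow> real" where
  "a k = \<eta> / (2^k * ((real k + 2) * (f (tk k))^2 + 1))"
definition sk :: "nat \<Rightarrow> real" where
  "sk k = 2 * (real k + 2) * (f (tk k))^2 / a k + 4"

lemma den_pos: "(real k + 2) * (f (tk k))^2 + 1 > 0" by (intro add_nonneg_pos) auto

lemma a_pos: "a k > 0"
  using eta den_pos[of k] unfolding a_def by (intro divide_pos_pos mult_pos_pos) auto

lemma a_le: "a k \<le> \<eta> / 2^k"
proof -
  have "1 \<le> (real k + 2) * (f (tk k))^2 + 1" by simp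
  then have "2^k * 1 \<le> 2^k * ((real k + 2) * (f (tk k))^2 + 1)" by (intro mult_left_mono) auto
  moreover have "0 < 2^k * ((real k + 2) * (f (tk k))^2 + 1) * 2^k"
    using den_pos[of k] by (intro mult_pos_pos) auto
  ultimately show ?thesis unfolding a_def using eta by (intro divide_left_mono) auto
qed

lemma a_f: "a k * ((real k + 2) * (f (tk k))^2) \<le> \<eta> / 2^k"
proof -
  define q where "q = (real k + 2) * (f (tk k))^2"
  have q: "q \<ge> 0" by (simp add: q_def)
  have "a k * q = \<eta> / 2^k * (q / (q + 1))" by (simp add: a_def q_def)
  also have "\<dots> \<le> \<eta> / 2^k * 1" using q eta by (intro mult_left_mono) auto
  finally show ?thesis by (simp add: q_def)
qed

lemma sk_ge: "sk k \<ge> 4"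
  using a_pos[of k] by (simp add: sk_def)

lemma ask: "a k * sk k = 2 * (real k + 2) * (f (tk k))^2 + 4 * a k"
  using a_pos[of k] by (simp add: sk_def field_simps)

definition v :: "nat \<Rightarrow> real \<Rightarrow> real" where
  "v k t = a k * Sst (sk k * (t - tk k) + x0)"
definition w :: "nat \<Rightarrow> real \<Rightarrow> real" where
  "w k t = a k * sk k * Sd (sk k * (t - tk k) + x0)"

lemma v_zero: assumes "t \<le> tk k - 1/2" shows "v k t = 0"
proof -
  have "sk k * (t - tk k) \<le> sk k * (-1/2)" using assms sk_ge[of k] by (intro mult_left_mono) auto
  then have "sk k * (t - tk k) + x0 \<le> -1" using sk_ge[of k] x0 by linarith
  then show ?thesis by (simp add: v_def Sst_low)
qed

lemma w_zero: assumes "\<bar>t - tk k\<bar> \<ge> 2 / sk k" shows "w k t = 0"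
proof -
  have s: "sk k > 0" using sk_ge[of k] by simp
  have "sk k * \<bar>t - tk k\<bar> \<ge> 2" using assms s by (simp add: field_simps)
  then have "\<bar>sk k * (t - tk k)\<bar> \<ge> 2" using s by (simp add: abs_mult)
  then have "\<bar>sk k * (t - tk k) + x0\<bar> \<ge> 1" using x0 by linarith
  then show ?thesis by (simp add: w_def Sd_zero)
qed

lemma w_nz: "w k t \<noteq> 0 \<Longrightarrow> \<bar>t - tk k\<bar> < 2 / sk k"
  using w_zero by force

lemma two_sk: "2 / sk k \<le> 1/2"
  using sk_ge[of k] by (simp add: field_simps)

lemma w_nonneg: "w k t \<ge> 0"
  using a_pos[of k] sk_ge[of k] Sd_nonneg by (simp add: w_def)

lemma w_le: "w k t \<le> a k * sk k * M"
  using a_pos[of k] sk_ge[of k] Mb by (simp add: w_def)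

lemma v_nonneg: "v k t \<ge> 0"
  using a_pos[of k] Sst_nonneg by (simp add: v_def)

lemma v_le: "v k t \<le> a k"
  using a_pos[of k] Sst_le1 by (simp add: v_def mult_left_le)

lemma v_deriv: "(v k has_real_derivative w k t) (at t)"
proof -
  have "((\<lambda>t. sk k * (t - tk k) + x0) has_real_derivative sk k) (at t)"
    by (auto intro!: derivative_eq_intros)
  from DERIV_chain2[OF Sst_deriv this]
  have "((\<lambda>t. Sst (sk k * (t - tk k) + x0)) has_real_derivative Sd (sk k * (t - tk k) + x0) * sk k) (at t)" .
  then have "((\<lambda>t. a k * Sst (sk k * (t - tk k) + x0)) has_real_derivative a k * (Sd (sk k * (t - tk k) + x0) * sk k)) (at t)"
    by (rule DERIV_cmult)
  then show ?thesis by (simp add: v_def[abs_def] w_def mult_ac)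
qed

lemma smk_v: "smk S n (v k)"
proof -
  have "smk UNIV n (\<lambda>t. Sst (sk k * t + (x0 - sk k * tk k)))"
    by (rule smk_comp[OF open_UNIV open_UNIV smk_Sst smk_affine]) auto
  then have "smk UNIV n (\<lambda>t. a k * Sst (sk k * t + (x0 - sk k * tk k)))" by (rule smk_cmult[OF open_UNIV])
  moreover have "(\<lambda>t. a k * Sst (sk k * t + (x0 - sk k * tk k))) = v k"
    by (rule ext) (simp add: v_def algebra_simps)
  ultimately show ?thesis unfolding smk_def by simp
qed

definition NN :: "real \<Rightarrow> nat" where "NN R = nat \<lceil>R\<rceil>"

lemma far: assumes "k \<ge> NN R" shows "tk k \<ge> R + 1/2"
proof -
  have "real k \<ge> R" using assms unfolding NN_def by linarith
  then show ?thesis using tk_ge[of k] by linarith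
qed

definition u :: "real \<Rightarrow> real" where "u t = (\<Sum>k. v k t)"
definition W :: "real \<Rightarrow> real" where "W t = (\<Sum>k. w k t)"

lemma u_fin: assumes "t < R" shows "u t = (\<Sum>k<NN R. v k t)"
  unfolding u_def
proof (rule suminf_finite)
  fix k assume "k \<notin> {..<NN R}"
  then have "tk k \<ge> R + 1/2" using far by simp
  then show "v k t = 0" using assms by (intro v_zero) linarith
qed simp

lemma W_fin: assumes "t < R" shows "W t = (\<Sum>k<NN R. w k t)"
  unfolding W_def
proof (rule suminf_finite)
  fix k assume "k \<notin> {..<NN R}"
  then have "tk k \<ge> R + 1/2" using far by simp
  then have "\<bar>t - tk k\<bar> \<ge> 2 / sk k" using two_sk[of k] assms by linarith
  then show "w k t = 0" by (rule w_zero)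
qed simp

lemma u_deriv: "(u has_real_derivative W t) (at t)"
proof -
  have "((\<lambda>x. \<Sum>k<NN (t+1). v k x) has_real_derivative (\<Sum>k<NN (t+1). w k t)) (at t)"
    by (intro DERIV_sum v_deriv)
  then have "(u has_real_derivative (\<Sum>k<NN (t+1). w k t)) (at t)"
    by (rule has_field_derivative_transform_within_open[of _ _ _ "{..<t+1}"]) (auto simp: u_fin)
  then show ?thesis using W_fin[of t "t+1"] by simp
qed

lemma deriv_u: "deriv u = W"
  by (rule ext, rule DERIV_imp_deriv, rule u_deriv)

lemma smk_u: "smk UNIV n u"
proof (rule smk_local)
  fix x :: real assume "x \<in> UNIV"
  have "smk {..<x+1} n (\<lambda>t. \<Sum>k<NN (x+1). v k t)"
    by (intro smk_sum smk_v) auto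
  then have "smk {..<x+1} n u" using smk_cong[of "{..<x+1}" u "\<lambda>t. \<Sum>k<NN (x+1). v k t" n]
    by (auto simp: u_fin)
  then show "\<exists>U. x \<in> U \<and> smk U n u" by (intro exI[of _ "{..<x+1}"]) auto
qed

lemma u_low: assumes "t \<le> 5/2" shows "u t = 0"
proof -
  have "v k t = 0" for k using tk_ge[of k] assms by (intro v_zero) auto
  then show ?thesis by (simp add: u_def)
qed

lemma W_low: assumes "t \<le> 5/2" shows "W t = 0"
proof -
  have "w k t = 0" for k
    using tk_ge[of k] two_sk[of k] assms by (intro w_zero) auto
  then show ?thesis by (simp add: W_def)
qed

lemma summable_a: "summable a"
proof (rule summable_comparison_test[of _ "\<lambda>k. \<eta> * (1/2)^k"])
  show "\<exists>N. \<forall>n\<ge>N. norm (a n) \<le> \<eta> * (1/2)^n"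
  proof (intro exI allI impI)
    fix n :: nat
    have "norm (a n) = a n" using a_pos[of n] by simp
    also have "\<dots> \<le> \<eta> / 2^n" by (rule a_le)
    also have "\<dots> = \<eta> * (1/2)^n" by (simp add: power_one_over)
    finally show "norm (a n) \<le> \<eta> * (1/2)^n" .
  qed
  show "summable (\<lambda>k. \<eta> * (1/2::real)^k)" by (intro summable_mult summable_geometric) simp
qed

definition U where "U = suminf a"

lemma U_le: "U \<le> 2 * \<eta>"
proof -
  have "U \<le> (\<Sum>k. \<eta> * (1/2)^k)"
    unfolding U_def
    by (intro suminf_le summable_a summable_mult summable_geometric)
       (use a_le in \<open>auto simp: power_one_over\<close>)
  also have "\<dots> = 2 * \<eta>" by (simp add: suminf_mult suminf_geometric)
  finally show ?thesis .
qed

lemma u_nonneg: "u t \<ge> 0"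
  using u_fin[of t "t+1"] v_nonneg by (simp add: sum_nonneg)

lemma u_le: "u t \<le> U"
proof -
  have "u t \<le> (\<Sum>k<NN (t+1). a k)" using u_fin[of t "t+1"] v_le by (simp add: sum_mono)
  also have "\<dots> \<le> U" unfolding U_def by (rule sum_le_suminf[OF summable_a]) (use a_pos in \<open>auto intro: less_imp_le\<close>)
  finally show ?thesis .
qed

lemma W_nonneg: "W t \<ge> 0"
  using W_fin[of t "t+1"] w_nonneg by (simp add: sum_nonneg)

lemma W_ge: "W t \<ge> w k t"
proof -
  define N where "N = max (NN (t+1)) (Suc k)"
  have "W t = (\<Sum>j<N. w j t)"
    unfolding W_def
  proof (rule suminf_finite)
    fix j assume "j \<notin> {..<N}"
    then have "tk j \<ge> t + 1 + 1/2" using far[of "t+1" j] by (simp add: N_def)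
    then show "w j t = 0" using two_sk[of j] by (intro w_zero) linarith
  qed simp
  also have "\<dots> \<ge> (\<Sum>j\<in>{k}. w j t)"
    by (rule sum_mono2) (auto simp: N_def w_nonneg)
  finally show ?thesis by simp
qed

lemma W_single: assumes "W t \<noteq> 0" shows "\<exists>k. W t = w k t \<and> \<bar>t - tk k\<bar> < 2 / sk k"
proof -
  have "\<exists>k. w k t \<noteq> 0"
  proof (rule ccontr)
    assume "\<not> (\<exists>k. w k t \<noteq> 0)"
    then have "W t = 0" by (simp add: W_def)
    then show False using assms by simp
  qed
  then obtain k where k: "w k t \<noteq> 0" by blast
  have kk: "\<bar>t - tk k\<bar> < 2 / sk k" using w_nz[OF k] .
  have "w j t = 0" if "j \<noteq> k" for j
  proof (rule w_zero)
    have "\<bar>tk j - tk k\<bar> \<ge> 2" using tk_sep that by simp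
    then show "\<bar>t - tk j\<bar> \<ge> 2 / sk j" using kk two_sk[of k] two_sk[of j] by linarith
  qed
  then have "W t = (\<Sum>j\<in>{k}. w j t)" unfolding W_def by (intro suminf_finite) auto
  then show ?thesis using kk by auto
qed

end



lemma smk_subset: "smk S n f \<Longrightarrow> T \<subseteq> S \<Longrightarrow> smk T n f"
  unfolding smk_def by blast

context constr begin

definition h :: "real \<Rightarrow> real" where "h t = u t / (f t)^2"

lemma h_low: "t \<le> 5/2 \<Longrightarrow> h t = 0" by (simp add: h_def u_low)

lemma h_nonneg: "h t \<ge> 0" by (simp add: h_def u_nonneg)

lemma smk_h: "smk UNIV n h"
proof (rule smk_local)
  fix x :: real assume "x \<in> UNIV"
  show "\<exists>U. x \<in> U \<and> smk U n h"
  proof (cases "x < 5/2")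
    case True
    have "smk {..<5/2} n h" using smk_cong[of "{..<5/2}" h "\<lambda>_. 0" n] smk_const h_low by auto
    then show ?thesis using True by (intro exI[of _ "{..<5/2}"]) auto
  next
    case False
    have su: "smk {0<..} n u" by (rule smk_subset[OF smk_u]) auto
    have sf: "smk {0<..} n f" by (rule smk_subset[OF smf]) auto
    have sff: "smk {0<..} n (\<lambda>t. f t * f t)" by (intro smk_mult sf) auto
    have nz: "\<And>x. x \<in> {0<..} \<Longrightarrow> f x * f x \<noteq> 0" using f_pos by fastforce
    have "smk {0<..} n (\<lambda>t. inverse (f t * f t))" using smk_inverse[OF _ sff nz] by auto
    then have "smk {0<..} n (\<lambda>t. u t * inverse (f t * f t))" by (intro smk_mult su) auto
    then have "smk {0<..} n h"
      using smk_cong[of "{0<..}" h "\<lambda>t. u t * inverse (f t * f t)" n]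
      by (auto simp: h_def power2_eq_square divide_inverse)
    then show ?thesis using False by (intro exI[of _ "{0<..}"]) auto
  qed
qed

lemma h_diff: "h differentiable at x" using smk_diffD[OF smk_h[of 0]] by simp

lemma h_cont: "continuous_on A h"
  using h_diff by (meson continuous_at_imp_continuous_on differentiable_imp_continuous_within)

definition hd :: "real \<Rightarrow> real" where
  "hd t = (W t * (f t)^2 - u t * (2 * f t * deriv f t)) / ((f t)^2 * (f t)^2)"

lemma h_deriv: assumes "t > 0" shows "(h has_real_derivative hd t) (at t)"
proof -
  have df': "(f has_real_derivative deriv f t) (at t)"
    using df by (simp add: DERIV_deriv_iff_real_differentiable)
  have "((\<lambda>x. (f x)^2) has_real_derivative 2 * f t * deriv f t) (at t)"
    using DERIV_power[OF df', of 2] by (simp add: mult_ac)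
  from DERIV_divide[OF u_deriv this] show ?thesis
    using f_pos[OF assms] unfolding h_def[abs_def] hd_def by simp
qed

lemma h_bound: assumes "t \<ge> 2" shows "h t \<le> U / \<beta>^2 * (1 / (t - 1)^2)"
proof -
  have "(\<beta> * (t - 1))^2 \<le> (f t)^2"
    using flow[OF assms] beta assms by (intro power_mono) auto
  moreover have "(\<beta> * (t - 1))^2 > 0" using beta assms by simp
  ultimately have "u t / (f t)^2 \<le> U / (\<beta> * (t - 1))^2"
    using u_le[of t] u_nonneg[of t] by (intro frac_le) auto
  then show ?thesis by (simp add: h_def power_mult_distrib)
qed

definition H :: "real \<Rightarrow> real" where "H t = integral {-1..t} h"

lemma H_low: assumes "t \<le> 5/2" shows "H t = 0"
proof -
  have "integral {-1..t} h = integral {-1..t} (\<lambda>_. 0::real)"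
    by (rule integral_cong) (use assms h_low in auto)
  then show ?thesis by (simp add: H_def)
qed

lemma H_deriv: "(H has_real_derivative h t) (at t)"
proof (cases "t < 5/2")
  case True
  have "((\<lambda>_. 0) has_real_derivative 0) (at t)" by simp
  then have "(H has_real_derivative 0) (at t)"
    by (rule has_field_derivative_transform_within_open[of _ _ _ "{..<5/2}"]) (use True H_low in auto)
  then show ?thesis using h_low True by simp
next
  case False
  have "((\<lambda>x. integral {-1..x} h) has_real_derivative h t) (at t within {-1..t+1})"
    using False by (intro integral_has_real_derivative h_cont) auto
  moreover have "at t within {-1..t+1} = at t"
    using False by (intro at_within_interior) auto
  ultimately show ?thesis by (simp add: H_def[abs_def])
qed

lemma deriv_H: "deriv H = h"
  by (rule ext, rule DERIV_imp_deriv, rule H_deriv)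

lemma smk_H: "smk UNIV n H"
proof (cases n)
  case 0 then show ?thesis using H_deriv by (auto simp: smk_0 real_differentiable_def)
next
  case (Suc k) then show ?thesis using H_deriv smk_h by (auto simp: smk_Suc deriv_H real_differentiable_def)
qed

lemma H_nonneg: "H t \<ge> 0"
  unfolding H_def by (rule integral_nonneg) (auto intro: integrable_continuous_interval h_cont h_nonneg)

lemma int_inv_sq: fixes t :: real assumes "t \<ge> 2" shows "((\<lambda>s. 1 / (s - 1)^2) has_integral (1 - 1/(t-1))) {2..t}"
proof -
  have "((\<lambda>s. 1 / (s - 1)^2) has_integral ((- 1/(t-1)) - (- 1/(2-1)))) {2..t}"
  proof (rule fundamental_theorem_of_calculus[OF assms])
    fix x assume x: "x \<in> {2..t}"
    have "((\<lambda>s. - 1 / (s - 1)) has_real_derivative 1 / (x - 1)^2) (at x)"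
      using x by (auto intro!: derivative_eq_intros simp: power2_eq_square field_simps)
    then show "((\<lambda>s. - 1 / (s - 1)) has_vector_derivative 1 / (x - 1)^2) (at x within {2..t})"
      by (simp add: has_real_derivative_iff_has_vector_derivative[symmetric] has_field_derivative_at_within)
  qed
  then show ?thesis by simp
qed

lemma H_le: "H t \<le> U / \<beta>^2"
proof (cases "t \<le> 5/2")
  case True
  have "U \<ge> 0" using u_le[of 0] u_nonneg[of 0] by simp
  then show ?thesis using True H_low by simp
next
  case False
  have I: "((\<lambda>s. U / \<beta>^2 * (1 / (s - 1)^2)) has_integral (U / \<beta>^2 * (1 - 1/(t-1)))) {2..t}"
    using has_integral_mult_right[OF int_inv_sq[of t], of "U / \<beta>^2"] False by simp
  have hi: "h integrable_on {-1..t}" by (intro integrable_continuous_interval h_cont)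
  have "integral {-1..2} h + integral {2..t} h = H t"
    unfolding H_def using Henstock_Kurzweil_Integration.integral_combine[of "-1" 2 t h] False hi by simp
  moreover have "integral {-1..2} h = 0" using H_low[of 2] by (simp add: H_def)
  moreover have "integral {2..t} h \<le> integral {2..t} (\<lambda>s. U / \<beta>^2 * (1 / (s - 1)^2))"
  proof (rule integral_le)
    show "h integrable_on {2..t}" by (intro integrable_continuous_interval h_cont)
    show "(\<lambda>s. U / \<beta>^2 * (1 / (s - 1)^2)) integrable_on {2..t}"
      using I by (rule has_integral_integrable)
    show "\<And>x. x \<in> {2..t} \<Longrightarrow> h x \<le> U / \<beta>^2 * (1 / (x - 1)^2)" using h_bound by auto
  qed
  moreover have "integral {2..t} (\<lambda>s. U / \<beta>^2 * (1 / (s - 1)^2)) = U / \<beta>^2 * (1 - 1/(t-1))"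
    using I by (rule integral_unique)
  moreover have "U / \<beta>^2 * (1 - 1/(t-1)) \<le> U / \<beta>^2"
  proof -
    have "U \<ge> 0" using u_le[of 0] u_nonneg[of 0] by simp
    moreover have "1 - 1/(t-1) \<le> 1" using False by simp
    ultimately show ?thesis using beta by (intro mult_left_le) auto
  qed
  ultimately show ?thesis by linarith
qed

lemma H_half: "H t \<le> 1/2"
proof -
  have "U / \<beta>^2 \<le> 2 * \<eta> / \<beta>^2" using U_le beta by (simp add: divide_right_mono)
  also have "\<dots> \<le> 1/2" using eta beta by (simp add: field_simps)
  finally have "U / \<beta>^2 \<le> 1/2" .
  then show ?thesis using H_le[of t] by linarith
qed

definition g :: "real \<Rightarrow> real" where "g t = 1 - H t - H (-t)"

lemma smk_g: "smk UNIV n g"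
proof -
  have "smk UNIV n (\<lambda>t. H ((-1) * t + 0))"
    by (rule smk_comp[OF open_UNIV open_UNIV smk_H smk_affine]) auto
  then have "smk UNIV n (\<lambda>t. 1 - H t - H ((-1) * t + 0))"
    by (intro smk_diff smk_const smk_H) auto
  then show ?thesis by (simp add: g_def[abs_def])
qed

lemma g_even: "g (-t) = g t" by (simp add: g_def)

lemma g_pos_side: "t \<ge> 0 \<Longrightarrow> g t = 1 - H t" by (simp add: g_def H_low)

lemma g_one: "\<bar>t\<bar> \<le> 5/2 \<Longrightarrow> g t = 1" by (simp add: g_def H_low)

lemma g_le1: "g t \<le> 1"
  using H_nonneg[of t] H_nonneg[of "-t"] by (simp add: g_def)

lemma g_ge: "g t \<ge> 1/2"
proof (cases "t \<ge> 0")
  case True then show ?thesis using g_pos_side H_half[of t] by simp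
next
  case False then show ?thesis using g_pos_side[of "-t"] H_half[of "-t"] g_even[of t] by simp
qed

lemma g_deriv: assumes "t > 0" shows "(g has_real_derivative - h t) (at t)"
proof -
  have "((\<lambda>x. 1 - H x) has_real_derivative - h t) (at t)"
    using H_deriv[of t] by (auto intro!: derivative_eq_intros)
  then show ?thesis
    by (rule has_field_derivative_transform_within_open[of _ _ _ "{0<..}"])
       (use assms g_pos_side in auto)
qed

definition m :: "real \<Rightarrow> real" where "m t = f t * g t"

lemma smk_m: "smk UNIV n m"
  unfolding m_def[abs_def] by (intro smk_mult smf smk_g) auto

lemma m_odd: "m (-t) = - m t" by (simp add: m_def f_odd g_even)

lemma m_eq_f: "\<bar>t\<bar> < 5/2 \<Longrightarrow> m t = f t" by (simp add: m_def g_one)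

lemma m_pos: "t > 0 \<Longrightarrow> m t > 0"
  using f_pos[of t] g_ge[of t] by (simp add: m_def)

lemma m_model: "model_surface m"
proof -
  have "eventually (\<lambda>x. x \<in> {-2<..<2::real}) (nhds 0)"
    by (rule eventually_nhds_in_open) auto
  then have "eventually (\<lambda>x. m x = f x) (nhds 0)" by eventually_elim (auto simp: m_eq_f)
  then have "deriv m 0 = deriv f 0" by (rule deriv_cong_ev) simp
  then show ?thesis unfolding model_surface_def smooth_real_iff
    using smk_m m_odd m_pos f1_0 by auto
qed

lemma deriv_m: assumes "t > 0" shows "deriv m t = deriv f t * g t - f t * h t"
proof -
  have d2: "(f has_real_derivative deriv f t) (at t)"
    using df by (simp add: DERIV_deriv_iff_real_differentiable)
  have "(m has_real_derivative f t * (- h t) + deriv f t * g t) (at t)"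
    unfolding m_def[abs_def] by (rule DERIV_mult'[OF d2 g_deriv[OF assms]])
  then show ?thesis by (simp add: DERIV_imp_deriv algebra_simps)
qed

lemma ddm: assumes "t > 0" shows "deriv (deriv m) t = deriv (deriv f) t * g t - W t / f t"
proof -
  have ev: "eventually (\<lambda>x. deriv m x = deriv f x * g x - f x * h x) (nhds t)"
  proof -
    have "eventually (\<lambda>x. x \<in> {0<..}) (nhds t)" by (rule eventually_nhds_in_open) (use assms in auto)
    then show ?thesis by eventually_elim (simp add: deriv_m)
  qed
  have d1: "(deriv f has_real_derivative deriv (deriv f) t) (at t)"
    using ddf by (simp add: DERIV_deriv_iff_real_differentiable)
  have d2: "(f has_real_derivative deriv f t) (at t)"
    using df by (simp add: DERIV_deriv_iff_real_differentiable)
  have "((\<lambda>x. deriv f x * g x - f x * h x) has_real_derivative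
        (deriv f t * (- h t) + deriv (deriv f) t * g t) - (f t * hd t + deriv f t * h t)) (at t)"
    by (rule DERIV_diff[OF DERIV_mult'[OF d1 g_deriv[OF assms]] DERIV_mult'[OF d2 h_deriv[OF assms]]])
  then have "deriv (deriv m) t = (deriv f t * (- h t) + deriv (deriv f) t * g t) - (f t * hd t + deriv f t * h t)"
    using deriv_cong_ev[OF ev refl] by (simp add: DERIV_imp_deriv)
  also have "\<dots> = deriv (deriv f) t * g t - W t / f t"
    using f_pos[OF assms] by (simp add: hd_def h_def power2_eq_square field_simps)
  finally show ?thesis .
qed

definition phi :: "real \<Rightarrow> real" where "phi t = W t / ((f t)^2 * g t)"

lemma rc_m_pos: assumes "t > 0" shows "radial_curv m t = K t + phi t"
proof -
  have f: "f t > 0" using f_pos[OF assms] .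
  have gg: "g t > 0" using g_ge[of t] by simp
  show ?thesis using assms f gg
    by (simp add: radial_curv_def ddm m_def phi_def power2_eq_square field_simps)
qed

lemma rc_m0: "radial_curv m 0 = K 0"
proof -
  have "(deriv^^3) m 0 = (deriv^^3) f 0"
    by (rule deriv_iter_local[of "{-2<..<2}"]) (auto simp: m_eq_f)
  then show ?thesis by (simp add: radial_curv_def)
qed

lemma phi_low: "t \<le> 5/2 \<Longrightarrow> phi t = 0" by (simp add: phi_def W_low)

lemma rc_diff: "t \<ge> 0 \<Longrightarrow> radial_curv m t - K t = phi t"
  by (cases "t = 0") (auto simp: rc_m_pos rc_m0 phi_low)

lemma phi_nonneg: "phi t \<ge> 0"
  using W_nonneg[of t] g_ge[of t] by (simp add: phi_def)

end



lemma int_bound: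
  fixes F :: "real \<Rightarrow> real" and c l r :: "nat \<Rightarrow> real"
  assumes F_meas: "F \<in> borel_measurable borel"
    and F_nn: "\<And>t. 0 \<le> F t" and F_le: "\<And>t. F t \<le> (\<Sum>k. c k * indicator {l k..r k} t)"
    and c_nn: "\<And>k. 0 \<le> c k" and lr: "\<And>k. l k \<le> r k"
    and fin: "\<And>t. \<exists>N. \<forall>k\<ge>N. c k * indicator {l k..r k} t = 0"
    and summ: "summable (\<lambda>k. c k * (r k - l k))"
  shows "integrable lborel F" "integral\<^sup>L lborel F \<le> (\<Sum>k. c k * (r k - l k))"
proof -
  define G where "G k t = c k * indicator {l k..r k} t" for k t
  have iG: "integrable lborel (G k)" for k
    unfolding G_def using lr[of k] by (intro integrable_mult_right integrable_real_indicator) auto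
  have intG: "integral\<^sup>L lborel (G k) = c k * (r k - l k)" for k
    unfolding G_def using lr[of k] by (simp add: measure_def)
  have sG: "summable (\<lambda>k. norm (G k t))" for t
  proof -
    obtain N where N: "\<forall>k\<ge>N. G k t = 0" using fin[of t] unfolding G_def by blast
    show ?thesis by (rule summable_finite[of "{..<N}"]) (use N in auto)
  qed
  have nG: "(\<integral>x. norm (G k x) \<partial>lborel) = c k * (r k - l k)" for k
  proof -
    have "(\<lambda>x. norm (G k x)) = G k" using c_nn[of k] by (auto simp: G_def)
    then show ?thesis using intG by simp
  qed
  have I: "integrable lborel (\<lambda>t. \<Sum>k. G k t)"
    by (rule integrable_suminf[OF iG]) (use sG summ nG in auto)
  have II: "(\<integral>t. (\<Sum>k. G k t) \<partial>lborel) = (\<Sum>k. c k * (r k - l k))"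
    using integral_suminf[OF iG, of ] sG summ nG intG by auto
  have le: "norm (F t) \<le> norm (\<Sum>k. G k t)" for t
  proof -
    have "0 \<le> (\<Sum>k. G k t)" using F_nn[of t] F_le[of t] unfolding G_def by linarith
    then show ?thesis using F_nn[of t] F_le[of t] unfolding G_def by simp
  qed
  show iF: "integrable lborel F"
    by (rule Bochner_Integration.integrable_bound[OF I]) (use F_meas le in auto)
  have "integral\<^sup>L lborel F \<le> (\<integral>t. (\<Sum>k. G k t) \<partial>lborel)"
    by (rule integral_mono[OF iF I]) (use F_le in \<open>auto simp: G_def\<close>)
  then show "integral\<^sup>L lborel F \<le> (\<Sum>k. c k * (r k - l k))" using II by simp
qed

lemma cont_meas: "(\<And>x. (q::real\<Rightarrow>real) differentiable at x) \<Longrightarrow> q \<in> borel_measurable borel"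
  by (intro borel_measurable_continuous_onI)
     (meson continuous_at_imp_continuous_on differentiable_imp_continuous_within)

lemma rc_meas:
  assumes "\<And>x. m differentiable at x" "\<And>x. deriv (deriv m) differentiable at x"
  shows "radial_curv m \<in> borel_measurable borel"
proof -
  have [measurable]: "m \<in> borel_measurable borel" "deriv (deriv m) \<in> borel_measurable borel"
    using cont_meas[OF assms(1)] cont_meas[OF assms(2)] by auto
  have "(\<lambda>t. if t = 0 then - (deriv ^^ 3) m 0 else - deriv (deriv m) t / m t) \<in> borel_measurable borel"
    by measurable
  moreover have "radial_curv m = (\<lambda>t. if t = 0 then - (deriv ^^ 3) m 0 else - deriv (deriv m) t / m t)"
    by (rule ext) (simp add: radial_curv_def)
  ultimately show ?thesis by simp
qed

context mfs begin

lemma K_meas: "K \<in> borel_measurable borel"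
  by (rule rc_meas[OF df dddf])

lemma K_big: assumes "\<beta> > 0" "\<And>s. s \<ge> 2 \<Longrightarrow> f s \<ge> \<beta> * (s - 1)"
  shows "\<exists>t\<ge>R. K t > -1"
proof (rule ccontr)
  assume "\<not> ?thesis"
  then have Kle: "\<And>t. t \<ge> R \<Longrightarrow> K t \<le> -1" by force
  define R' where "R' = max R 2"
  have [measurable]: "K \<in> borel_measurable borel" "f \<in> borel_measurable borel"
    using K_meas cont_meas[OF df] by auto
  have iA: "integrable lborel (\<lambda>t. indicator {0<..} t *\<^sub>R (K t * f t))"
    using Kf_int0 unfolding set_integrable_def .
  have "integrable lborel (\<lambda>t. \<beta> * indicator {R'..} t)"
  proof (rule Bochner_Integration.integrable_bound[OF iA])
    show "(\<lambda>t. \<beta> * indicator {R'..} t) \<in> borel_measurable lborel" by measurable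
    show "AE x in lborel. norm (\<beta> * indicator {R'..} x) \<le> norm (indicator {0<..} x *\<^sub>R (K x * f x))"
    proof (rule AE_I2)
      fix x show "norm (\<beta> * indicator {R'..} x) \<le> norm (indicator {0<..} x *\<^sub>R (K x * f x))"
      proof (cases "x \<ge> R'")
        case True
        have x2: "x \<ge> 2" "x \<ge> R" using True by (auto simp: R'_def)
        have b: "\<beta> \<le> f x"
        proof -
          have "\<beta> * 1 \<le> \<beta> * (x - 1)" using x2 assms(1) by (intro mult_left_mono) auto
          then show ?thesis using assms(2)[OF x2(1)] by simp
        qed
        have fk: "f x \<le> \<bar>K x\<bar> * f x"
        proof -
          have "1 * f x \<le> \<bar>K x\<bar> * f x" using Kle[OF x2(2)] b assms(1)
            by (intro mult_right_mono) auto
          then show ?thesis by simp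
        qed
        have bk: "\<beta> \<le> \<bar>K x\<bar> * f x" using b fk by linarith
        have fp: "\<bar>f x\<bar> = f x" using b assms(1) by simp
        show ?thesis using True x2 assms(1) bk fp by (simp add: abs_mult indicator_def)
      qed (auto simp: indicator_def)
    qed
  qed
  then have "integrable lborel (indicator {R'..} :: real \<Rightarrow> real)"
    using assms(1) by simp
  then have fin: "emeasure lborel {R'..} < \<infinity>" by (simp add: integrable_indicator_iff)
  then obtain c where c: "emeasure lborel {R'..} = ennreal c" "c \<ge> 0"
    using less_top ennreal_cases by (metis infinity_ennreal_def)
  define n where "n = c + 1"
  have "emeasure lborel {R'..R'+n} \<le> emeasure lborel {R'..}" by (rule emeasure_mono) auto
  moreover have "emeasure lborel {R'..R'+n} = ennreal n" using c by (simp add: n_def)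
  ultimately have "ennreal n \<le> ennreal c" using c by simp
  then show False using c by (simp add: n_def)
qed

end



context constr begin

lemma W_diff: "W differentiable at x"
  using smk_u[of "Suc 0"] unfolding smk_Suc smk_0 deriv_u by simp
lemma g_diff: "g differentiable at x" using smk_diffD[OF smk_g[of 0]] by simp

lemma meas_basic [measurable]:
  "W \<in> borel_measurable borel" "f \<in> borel_measurable borel" "g \<in> borel_measurable borel"
  "K \<in> borel_measurable borel"
  using cont_meas[OF W_diff] cont_meas[OF df] cont_meas[OF g_diff] K_meas by auto

lemma m_diff: "m differentiable at x" using smk_diffD[OF smk_m[of 0]] by simp
lemma ddm_diff: "deriv (deriv m) differentiable at x"
  using smk_m[of "Suc (Suc 0)"] unfolding smk_Suc smk_0 by simp

lemma meas_m [measurable]: "m \<in> borel_measurable borel" "radial_curv m \<in> borel_measurable borel"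
  using cont_meas[OF m_diff] rc_meas[OF m_diff ddm_diff] by auto

definition lk where "lk k = tk k - 2 / sk k"
definition rk where "rk k = tk k + 2 / sk k"

lemma lr: "lk k \<le> rk k" using sk_ge[of k] by (simp add: lk_def rk_def)
lemma rl: "rk k - lk k = 4 / sk k" by (simp add: lk_def rk_def)

lemma ind_fin: fixes e :: "nat \<Rightarrow> real" shows "\<exists>N. \<forall>k\<ge>N. e k * indicator {lk k..rk k} t = 0"
proof (intro exI allI impI)
  fix k assume "k \<ge> NN (t+1)"
  then have "tk k \<ge> t + 1 + 1/2" by (rule far)
  then have "t < lk k" using two_sk[of k] by (simp add: lk_def)
  then show "e k * indicator {lk k..rk k} t = 0" by simp
qed

lemma ind_summable: fixes e :: "nat \<Rightarrow> real" shows "summable (\<lambda>k. e k * indicator {lk k..rk k} t)"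
proof -
  obtain N where N: "\<forall>k\<ge>N. e k * indicator {lk k..rk k} t = 0" using ind_fin by blast
  show ?thesis by (rule summable_finite[of "{..<N}"]) (use N in auto)
qed

lemma single_le:
  fixes e :: "nat \<Rightarrow> real"
  assumes "\<And>k. e k \<ge> 0" "t \<in> {lk k..rk k}"
  shows "e k \<le> (\<Sum>j. e j * indicator {lk j..rk j} t)"
proof -
  have "(\<Sum>j\<in>{k}. e j * indicator {lk j..rk j} t) \<le> (\<Sum>j. e j * indicator {lk j..rk j} t)"
    by (rule sum_le_suminf[OF ind_summable]) (use assms in auto)
  moreover have "(\<Sum>j\<in>{k}. e j * indicator {lk j..rk j} t) = e k" using assms(2) by simp
  ultimately show ?thesis by simp
qed

lemma sum_nn: fixes e :: "nat \<Rightarrow> real" assumes "\<And>k. e k \<ge> 0" shows "0 \<le> (\<Sum>j. e j * indicator {lk j..rk j} t)"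
  by (rule suminf_nonneg[OF ind_summable]) (use assms in auto)

lemma big_t: assumes "W t \<noteq> 0" obtains k where "W t = w k t" "t \<in> {lk k..rk k}" "t \<ge> 2"
proof -
  obtain k where k: "W t = w k t" "\<bar>t - tk k\<bar> < 2 / sk k" using W_single[OF assms] by blast
  have "t \<ge> 2" using k(2) two_sk[of k] tk_ge[of k] by linarith
  moreover have "t \<in> {lk k..rk k}" using k(2) by (auto simp: lk_def rk_def)
  ultimately show ?thesis using k that by blast
qed

definition c2 where "c2 k = 4 * (a k * sk k * M)^2 / \<beta>^4"
definition d1 where "d1 k = a k * sk k * M / \<beta>"

lemma c2_nn: "c2 k \<ge> 0" by (simp add: c2_def)
lemma d1_nn: "d1 k \<ge> 0" using a_pos[of k] sk_ge[of k] Mb beta by (simp add: d1_def)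

lemma phi_sq_le: "(phi t)^2 \<le> (\<Sum>k. c2 k * indicator {lk k..rk k} t)"
proof (cases "W t = 0")
  case True then show ?thesis using sum_nn[of c2] c2_nn by (simp add: phi_def)
next
  case False
  then obtain k where k: "W t = w k t" "t \<in> {lk k..rk k}" "t \<ge> 2" by (rule big_t)
  have fb: "f t \<ge> \<beta>" using f_ge_beta k(3) .
  have den: "\<beta>^2 / 2 \<le> (f t)^2 * g t"
  proof -
    have "\<beta>^2 \<le> (f t)^2" using fb beta by (intro power_mono) auto
    moreover have "(f t)^2 * (1/2) \<le> (f t)^2 * g t" by (rule mult_left_mono) (use g_ge in auto)
    ultimately show ?thesis by linarith
  qed
  have b2: "\<beta>^2 / 2 > 0" using beta by simp
  have pos: "(f t)^2 * g t > 0" using den b2 by linarith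
  have p1: "phi t \<le> W t / (\<beta>^2 / 2)"
    unfolding phi_def using den W_nonneg[of t] pos b2 g_ge[of t] by (intro divide_left_mono mult_pos_pos) auto
  have p2: "W t \<le> a k * sk k * M" using k(1) w_le by simp
  have "phi t \<le> 2 * (a k * sk k * M) / \<beta>^2"
    using p1 p2 beta by (simp add: field_simps)
  then have "(phi t)^2 \<le> (2 * (a k * sk k * M) / \<beta>^2)^2"
    using phi_nonneg[of t] by (intro power_mono) auto
  also have "\<dots> = c2 k" by (simp add: c2_def power_divide power_mult_distrib)
  also have "\<dots> \<le> (\<Sum>k. c2 k * indicator {lk k..rk k} t)" by (rule single_le[OF c2_nn k(2)])
  finally show ?thesis .
qed

lemma Wf_le: "W t / f t \<le> (\<Sum>k. d1 k * indicator {lk k..rk k} t)"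
proof (cases "W t = 0")
  case True then show ?thesis using sum_nn[of d1] d1_nn by simp
next
  case False
  then obtain k where k: "W t = w k t" "t \<in> {lk k..rk k}" "t \<ge> 2" by (rule big_t)
  have fb: "f t \<ge> \<beta>" using f_ge_beta k(3) .
  have "W t / f t \<le> W t / \<beta>" using fb beta W_nonneg[of t] by (intro divide_left_mono) auto
  also have "\<dots> \<le> d1 k" unfolding d1_def using k(1) w_le[of k t] beta by (intro divide_right_mono) auto
  also have "\<dots> \<le> (\<Sum>k. d1 k * indicator {lk k..rk k} t)" by (rule single_le[OF d1_nn k(2)])
  finally show ?thesis .
qed

lemma Wf_nn: "W t / f t \<ge> 0"
proof (cases "t \<le> 5/2")
  case True then show ?thesis by (simp add: W_low)
next
  case False then show ?thesis using f_pos[of t] W_nonneg[of t] by simp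
qed

lemma a2sk: "(a k)^2 * sk k \<le> 6 * \<eta> * (1/2)^k"
proof -
  have e: "\<eta> / 2^k \<le> 1" using eta by (simp add: field_simps) (smt (verit) one_le_power)
  have "(a k)^2 * sk k = 2 * (a k * ((real k + 2) * (f (tk k))^2)) + 4 * (a k)^2"
    using ask[of k] by (simp add: power2_eq_square algebra_simps)
  also have "\<dots> \<le> 2 * (\<eta> / 2^k) + 4 * (\<eta> / 2^k)^2"
    using a_f[of k] a_le[of k] a_pos[of k] by (intro add_mono mult_left_mono power_mono) auto
  also have "(\<eta> / 2^k)^2 \<le> \<eta> / 2^k"
  proof -
    have "0 \<le> \<eta> / 2^k" using eta by simp
    then show ?thesis using mult_left_le[OF e, of "\<eta> / 2^k"] by (simp add: power2_eq_square)
  qed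
  then have "2 * (\<eta> / 2^k) + 4 * (\<eta> / 2^k)^2 \<le> 6 * (\<eta> / 2^k)" by simp
  also have "\<dots> = 6 * \<eta> * (1/2)^k" by (simp add: power_one_over)
  finally show ?thesis .
qed

lemma c2_term: "c2 k * (rk k - lk k) \<le> 16 * M^2 / \<beta>^4 * (6 * \<eta> * (1/2)^k)"
proof -
  have "c2 k * (rk k - lk k) = 16 * M^2 / \<beta>^4 * ((a k)^2 * sk k)"
    using sk_ge[of k] by (simp add: c2_def rl power2_eq_square field_simps)
  also have "\<dots> \<le> 16 * M^2 / \<beta>^4 * (6 * \<eta> * (1/2)^k)"
    using a2sk[of k] beta by (intro mult_left_mono) auto
  finally show ?thesis .
qed

lemma c2_summable: "summable (\<lambda>k. c2 k * (rk k - lk k))"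
proof (rule summable_comparison_test[of _ "\<lambda>k. 16 * M^2 / \<beta>^4 * (6 * \<eta> * (1/2)^k)"])
  show "\<exists>N. \<forall>n\<ge>N. norm (c2 n * (rk n - lk n)) \<le> 16 * M^2 / \<beta>^4 * (6 * \<eta> * (1/2)^n)"
    using c2_term c2_nn lr by (intro exI[of _ 0]) (auto simp: abs_of_nonneg)
  show "summable (\<lambda>k. 16 * M^2 / \<beta>^4 * (6 * \<eta> * (1/2::real)^k))"
    by (intro summable_mult summable_geometric) simp
qed

lemma c2_sum: "(\<Sum>k. c2 k * (rk k - lk k)) \<le> 192 * M^2 * \<eta> / \<beta>^4"
proof -
  have "(\<Sum>k. c2 k * (rk k - lk k)) \<le> (\<Sum>k. 16 * M^2 / \<beta>^4 * (6 * \<eta> * (1/2::real)^k))"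
    by (intro suminf_le c2_summable c2_term summable_mult summable_geometric) simp
  also have "\<dots> = (96 * M^2 * \<eta> / \<beta>^4) * (\<Sum>k. (1/2::real)^k)"
    by (subst suminf_mult[symmetric]) (auto intro: summable_geometric simp: algebra_simps)
  also have "\<dots> = 192 * M^2 * \<eta> / \<beta>^4" using suminf_geometric[of "1/2::real"] by simp
  finally show ?thesis .
qed

lemma d1_term: "d1 k * (rk k - lk k) = 4 * M / \<beta> * a k"
  using sk_ge[of k] by (simp add: d1_def rl field_simps)

lemma d1_summable: "summable (\<lambda>k. d1 k * (rk k - lk k))"
  unfolding d1_term by (intro summable_mult summable_a)

lemma d1_sum: "(\<Sum>k. d1 k * (rk k - lk k)) \<le> 8 * M * \<eta> / \<beta>"
proof -
  have "(\<Sum>k. d1 k * (rk k - lk k)) = 4 * M / \<beta> * U"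
    unfolding d1_term U_def by (intro suminf_mult summable_a)
  also have "\<dots> \<le> 4 * M / \<beta> * (2 * \<eta>)" using U_le Mb beta by (intro mult_left_mono) auto
  finally show ?thesis by simp
qed

lemma phi_meas[measurable]: "phi \<in> borel_measurable borel"
  unfolding phi_def[abs_def] by measurable

lemma phi_sq_int: "integrable lborel (\<lambda>t. (phi t)^2)"
  and phi_sq_integral: "integral\<^sup>L lborel (\<lambda>t. (phi t)^2) \<le> 192 * M^2 * \<eta> / \<beta>^4"
proof -
  note I = int_bound[of "\<lambda>t. (phi t)^2" c2 lk rk, OF _ _ phi_sq_le c2_nn lr ind_fin c2_summable]
  show "integrable lborel (\<lambda>t. (phi t)^2)" by (rule I(1)) auto
  show "integral\<^sup>L lborel (\<lambda>t. (phi t)^2) \<le> 192 * M^2 * \<eta> / \<beta>^4"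
  proof -
    have "(\<lambda>t. (phi t)^2) \<in> borel_measurable borel" by measurable
    then have "integral\<^sup>L lborel (\<lambda>t. (phi t)^2) \<le> (\<Sum>k. c2 k * (rk k - lk k))"
      using I(2) by simp
    then show ?thesis using c2_sum by linarith
  qed
qed

lemma Wf_int: "integrable lborel (\<lambda>t. W t / f t)"
  and Wf_integral: "integral\<^sup>L lborel (\<lambda>t. W t / f t) \<le> 8 * M * \<eta> / \<beta>"
proof -
  have [measurable]: "(\<lambda>t. W t / f t) \<in> borel_measurable borel" by measurable
  note I = int_bound[of "\<lambda>t. W t / f t" d1 lk rk, OF _ Wf_nn Wf_le d1_nn lr ind_fin d1_summable]
  show "integrable lborel (\<lambda>t. W t / f t)" by (rule I(1)) auto
  show "integral\<^sup>L lborel (\<lambda>t. W t / f t) \<le> 8 * M * \<eta> / \<beta>"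
    using I(2) d1_sum by fastforce
qed

end



context constr begin

lemma phi_neg: "t < 0 \<Longrightarrow> phi t = 0" by (simp add: phi_low)

lemma L2_eq: "(\<lambda>t. indicator {0..} t *\<^sub>R (radial_curv m t - K t)^2) = (\<lambda>t. (phi t)^2)"
  by (rule ext) (auto simp: indicator_def rc_diff phi_neg)

lemma L2_int: "set_integrable lborel {0..} (\<lambda>t. (radial_curv m t - K t)^2)"
  unfolding set_integrable_def L2_eq by (rule phi_sq_int)

lemma L2_val: "(LBINT t:{0..}. (radial_curv m t - K t)^2) \<le> 192 * M^2 * \<eta> / \<beta>^4"
  unfolding set_lebesgue_integral_def L2_eq by (rule phi_sq_integral)

lemma rc_ge: "t \<ge> 0 \<Longrightarrow> radial_curv m t \<ge> K t"
  using rc_diff[of t] phi_nonneg[of t] by simp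

lemma spike: "radial_curv m (tk k) > real k + 1"
proof -
  have t0: "tk k > 0" using tk_ge[of k] by simp
  have fp: "f (tk k) > 0" using f_pos[OF t0] .
  have wk: "w k (tk k) = a k * sk k / 2" by (simp add: w_def x0)
  have "a k * sk k / 2 \<ge> (real k + 2) * (f (tk k))^2" using ask[of k] a_pos[of k]
    by (simp add: algebra_simps)
  then have Wb: "W (tk k) \<ge> (real k + 2) * (f (tk k))^2" using W_ge[of k "tk k"] wk by simp
  have gp: "0 < g (tk k)" "g (tk k) \<le> 1" using g_ge[of "tk k"] g_le1 by auto
  have "(real k + 2) * (f (tk k))^2 / ((f (tk k))^2 * 1) \<le> W (tk k) / ((f (tk k))^2 * g (tk k))"
    using Wb gp fp W_nonneg[of "tk k"] by (intro frac_le mult_left_mono mult_pos_pos) auto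
  then have "phi (tk k) \<ge> real k + 2" using fp by (simp add: phi_def)
  then show ?thesis using rc_m_pos[OF t0] tkK[of k] by simp
qed

lemma limsup_m: "Limsup at_top (\<lambda>t. ereal (radial_curv m t)) = \<infinity>"
proof (rule Limsup_eqI)
  fix P :: "real \<Rightarrow> bool" assume "eventually P at_top"
  then obtain N where N: "\<And>t. t \<ge> N \<Longrightarrow> P t" by (auto simp: eventually_at_top_linorder)
  show "\<infinity> \<le> Sup ((\<lambda>t. ereal (radial_curv m t)) ` Collect P)"
  proof -
    have "(SUP t\<in>Collect P. ereal (radial_curv m t)) = \<infinity>"
    proof (rule SUP_PInfty)
      fix n :: nat
      define k where "k = max n (nat \<lceil>N\<rceil>)"
      have "tk k \<ge> N" using tk_ge[of k] unfolding k_def by linarith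
      moreover have "ereal (real n) \<le> ereal (radial_curv m (tk k))"
        using spike[of k] unfolding k_def by simp
      ultimately show "\<exists>i\<in>Collect P. ereal (real n) \<le> ereal (radial_curv m i)" using N by blast
    qed
    then show ?thesis by simp
  qed
qed simp

definition Q where "Q t = K t * f t * g t + W t / f t"

lemma Qeq: "t > 0 \<Longrightarrow> radial_curv m t * m t = Q t"
  using f_pos[of t] g_ge[of t] by (simp add: rc_m_pos Q_def m_def phi_def power2_eq_square field_simps)

lemma Kfg_int: "set_integrable lborel {0<..} (\<lambda>t. K t * f t * g t)"
proof (rule set_integrable_bound[OF Kf_int0])
  show "set_borel_measurable lborel {0<..} (\<lambda>t. K t * f t * g t)"
    unfolding set_borel_measurable_def by measurable
  show "AE x in lborel. x \<in> {0<..} \<longrightarrow> norm (K x * f x * g x) \<le> norm (K x * f x)"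
  proof (rule AE_I2, intro impI)
    fix x :: real
    have "\<bar>g x\<bar> \<le> 1" using g_ge[of x] g_le1[of x] by simp
    then have "\<bar>K x * f x\<bar> * \<bar>g x\<bar> \<le> \<bar>K x * f x\<bar> * 1" by (intro mult_left_mono) auto
    then show "norm (K x * f x * g x) \<le> norm (K x * f x)" by (simp add: abs_mult)
  qed
qed

lemma Wf_set: "set_integrable lborel {0<..} (\<lambda>t. W t / f t)"
proof -
  have "(\<lambda>t. indicator {0<..} t *\<^sub>R (W t / f t)) = (\<lambda>t. W t / f t)"
    by (rule ext) (auto simp: indicator_def W_low)
  then show ?thesis unfolding set_integrable_def using Wf_int by simp
qed

lemma Wf_set_val: "(LBINT t:{0<..}. W t / f t) = integral\<^sup>L lborel (\<lambda>t. W t / f t)"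
proof -
  have "(\<lambda>t. indicator {0<..} t *\<^sub>R (W t / f t)) = (\<lambda>t. W t / f t)"
    by (rule ext) (auto simp: indicator_def W_low)
  then show ?thesis unfolding set_lebesgue_integral_def by simp
qed

lemma Q_int: "set_integrable lborel {0<..} Q"
  unfolding Q_def[abs_def] by (intro set_integral_add Kfg_int Wf_set)

lemma ftc_m: "finite_total_curvature m"
  unfolding finite_total_curvature_def
proof
  show "set_integrable lborel {0<..} (\<lambda>t. max (radial_curv m t) 0 * m t)"
  proof (rule set_integrable_bound[OF Q_int])
    show "set_borel_measurable lborel {0<..} (\<lambda>t. max (radial_curv m t) 0 * m t)"
      unfolding set_borel_measurable_def by measurable
    show "AE x in lborel. x \<in> {0<..} \<longrightarrow> norm (max (radial_curv m x) 0 * m x) \<le> norm (Q x)"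
    proof (rule AE_I2, intro impI)
      fix x :: real assume "x \<in> {0<..}"
      then have x: "x > 0" by simp
      have "\<bar>max (radial_curv m x) 0\<bar> * \<bar>m x\<bar> \<le> \<bar>radial_curv m x\<bar> * \<bar>m x\<bar>"
        by (intro mult_right_mono) auto
      then show "norm (max (radial_curv m x) 0 * m x) \<le> norm (Q x)"
        using Qeq[OF x] by (simp add: abs_mult)
    qed
  qed
  show "set_integrable lborel {0<..} (\<lambda>t. min (radial_curv m t) 0 * m t)"
  proof (rule set_integrable_bound[OF Q_int])
    show "set_borel_measurable lborel {0<..} (\<lambda>t. min (radial_curv m t) 0 * m t)"
      unfolding set_borel_measurable_def by measurable
    show "AE x in lborel. x \<in> {0<..} \<longrightarrow> norm (min (radial_curv m x) 0 * m x) \<le> norm (Q x)"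
    proof (rule AE_I2, intro impI)
      fix x :: real assume "x \<in> {0<..}"
      then have x: "x > 0" by simp
      have "\<bar>min (radial_curv m x) 0\<bar> * \<bar>m x\<bar> \<le> \<bar>radial_curv m x\<bar> * \<bar>m x\<bar>"
        by (intro mult_right_mono) auto
      then show "norm (min (radial_curv m x) 0 * m x) \<le> norm (Q x)"
        using Qeq[OF x] by (simp add: abs_mult)
    qed
  qed
qed

lemma tc_m: "total_curvature m = 2 * pi * (LBINT t:{0<..}. Q t)"
proof -
  have i: "set_integrable lborel {0<..} (\<lambda>t. max (radial_curv m t) 0 * m t)"
          "set_integrable lborel {0<..} (\<lambda>t. min (radial_curv m t) 0 * m t)"
    using ftc_m unfolding finite_total_curvature_def by auto
  have "(LBINT t:{0<..}. max (radial_curv m t) 0 * m t) + (LBINT t:{0<..}. min (radial_curv m t) 0 * m t)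
      = (LBINT t:{0<..}. max (radial_curv m t) 0 * m t + min (radial_curv m t) 0 * m t)"
    using set_integral_add(2)[OF i] by simp
  also have "\<dots> = (LBINT t:{0<..}. Q t)"
  proof (rule set_lebesgue_integral_cong)
    show "\<forall>x. x \<in> {0<..} \<longrightarrow> max (radial_curv m x) 0 * m x + min (radial_curv m x) 0 * m x = Q x"
    proof (intro allI impI)
      fix x :: real assume "x \<in> {0<..}"
      then have "radial_curv m x * m x = Q x" by (intro Qeq) simp
      moreover have "max (radial_curv m x) 0 * m x + min (radial_curv m x) 0 * m x = radial_curv m x * m x"
        by (cases "radial_curv m x \<ge> 0") (auto simp: max_def min_def algebra_simps)
      ultimately show "max (radial_curv m x) 0 * m x + min (radial_curv m x) 0 * m x = Q x" by simp
    qed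
  qed simp
  finally have e: "(LBINT t:{0<..}. max (radial_curv m t) 0 * m t) + (LBINT t:{0<..}. min (radial_curv m t) 0 * m t)
      = (LBINT t:{0<..}. Q t)" .
  have "total_curvature m = 2 * pi * ((LBINT t:{0<..}. max (radial_curv m t) 0 * m t) + (LBINT t:{0<..}. min (radial_curv m t) 0 * m t))"
    unfolding total_curvature_def by (simp only: distrib_left)
  then show ?thesis using e by simp
qed

definition AK where "AK = (LBINT t:{0<..}. \<bar>K t * f t\<bar>)"

lemma one_minus_g: "t > 0 \<Longrightarrow> 1 - g t \<le> 2 * \<eta> / \<beta>^2"
proof -
  assume "t > 0"
  then have "1 - g t = H t" using g_pos_side by simp
  also have "\<dots> \<le> U / \<beta>^2" by (rule H_le)
  also have "\<dots> \<le> 2 * \<eta> / \<beta>^2" using U_le beta by (simp add: divide_right_mono)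
  finally show ?thesis .
qed

lemma tc_bound: "\<bar>total_curvature f - total_curvature m\<bar> \<le> 2 * pi * (2 * \<eta> / \<beta>^2 * AK + 8 * M * \<eta> / \<beta>)"
proof -
  define D where "D = 2 * \<eta> / \<beta>^2"
  have iKf: "set_integrable lborel {0<..} (\<lambda>t. K t * f t)" by (rule Kf_int0)
  have iA: "set_integrable lborel {0<..} (\<lambda>t. \<bar>K t * f t\<bar>)" by (rule set_integrable_abs[OF iKf])
  have idiff: "set_integrable lborel {0<..} (\<lambda>t. K t * f t - K t * f t * g t)"
    by (intro set_integral_diff(1) iKf Kfg_int)
  have e1: "IK - (LBINT t:{0<..}. Q t)
      = (LBINT t:{0<..}. K t * f t - K t * f t * g t) - (LBINT t:{0<..}. W t / f t)"
    unfolding IK_def Q_def[abs_def]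
    using set_integral_add(2)[OF Kfg_int Wf_set] set_integral_diff(2)[OF iKf Kfg_int] by simp
  have b1: "\<bar>LBINT t:{0<..}. K t * f t - K t * f t * g t\<bar> \<le> D * AK"
  proof -
    have "\<bar>LBINT t:{0<..}. K t * f t - K t * f t * g t\<bar> \<le> (LBINT t:{0<..}. \<bar>K t * f t - K t * f t * g t\<bar>)"
      using set_integral_norm_bound[OF idiff] by simp
    also have "\<dots> \<le> (LBINT t:{0<..}. D * \<bar>K t * f t\<bar>)"
    proof (rule set_integral_mono)
      show "set_integrable lborel {0<..} (\<lambda>t. \<bar>K t * f t - K t * f t * g t\<bar>)"
        by (rule set_integrable_abs[OF idiff])
      show "set_integrable lborel {0<..} (\<lambda>t. D * \<bar>K t * f t\<bar>)"
        using iA by (rule set_integrable_mult_right)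
      fix t :: real assume "t \<in> {0<..}"
      then have t: "t > 0" by simp
      have ee: "K t * f t - K t * f t * g t = (K t * f t) * (1 - g t)" by (simp add: algebra_simps)
      have "\<bar>1 - g t\<bar> = 1 - g t" using g_le1[of t] by simp
      then have "\<bar>K t * f t - K t * f t * g t\<bar> = \<bar>K t * f t\<bar> * (1 - g t)"
        unfolding ee abs_mult by simp
      also have "\<dots> \<le> \<bar>K t * f t\<bar> * D"
        using one_minus_g[OF t] by (intro mult_left_mono) (auto simp: D_def)
      finally show "\<bar>K t * f t - K t * f t * g t\<bar> \<le> D * \<bar>K t * f t\<bar>" by (simp add: mult.commute)
    qed
    also have "\<dots> = D * AK" by (simp add: AK_def)
    finally show ?thesis .
  qed
  have b2: "0 \<le> (LBINT t:{0<..}. W t / f t)" "(LBINT t:{0<..}. W t / f t) \<le> 8 * M * \<eta> / \<beta>"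
  proof -
    show "(LBINT t:{0<..}. W t / f t) \<le> 8 * M * \<eta> / \<beta>" using Wf_set_val Wf_integral by simp
    show "0 \<le> (LBINT t:{0<..}. W t / f t)" unfolding Wf_set_val using Wf_nn by simp
  qed
  have "\<bar>total_curvature f - total_curvature m\<bar> = 2 * pi * \<bar>IK - (LBINT t:{0<..}. Q t)\<bar>"
    unfolding tc_eq tc_m by (simp add: abs_mult flip: right_diff_distrib)
  also have "\<dots> \<le> 2 * pi * (D * AK + 8 * M * \<eta> / \<beta>)"
    using e1 b1 b2 by (intro mult_left_mono) auto
  finally show ?thesis by (simp add: D_def)
qed

end

theorem theorem3p1:
  fixes f :: "real \<Rightarrow> real"
  assumes "model_surface f"
    and "finite_total_curvature f"
    and "total_curvature f < 2 * pi"
  shows "\<forall>\<epsilon>>0. \<exists>m :: real \<Rightarrow> real.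
           model_surface m \<and> finite_total_curvature m
         \<and> (\<forall>t\<ge>0. radial_curv m t \<ge> radial_curv f t)
         \<and> set_integrable lborel {0..} (\<lambda>t. (radial_curv m t - radial_curv f t)\<^sup>2)
         \<and> sqrt (LBINT t:{0..}. (radial_curv m t - radial_curv f t)\<^sup>2) < \<epsilon>
         \<and> Limsup at_top (\<lambda>t. ereal (radial_curv m t)) = \<infinity>
         \<and> \<bar>total_curvature f - total_curvature m\<bar> < \<epsilon>"
proof -
  interpret mfs f using assms by unfold_locales
  obtain \<beta> where beta: "\<beta> > 0" "\<And>s. s \<ge> 2 \<Longrightarrow> f s \<ge> \<beta> * (s - 1)"
    using f_lower by blast
  obtain M where M: "M > 0" "\<And>x. Sd x \<le> M" using Sd_bound by blast
  obtain x0 where x0: "\<bar>x0\<bar> < 1" "Sd x0 = 1/2" using Sd_half by blast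
  have ex: "\<exists>t. t \<ge> R \<and> K t > -1" for R using K_big[OF beta] by blast
  define nxt where "nxt R = (SOME t. t \<ge> R \<and> K t > -1)" for R
  have nxt: "nxt R \<ge> R \<and> K (nxt R) > -1" for R
    unfolding nxt_def by (rule someI_ex[OF ex])
  define tk where "tk = rec_nat (nxt 3) (\<lambda>k r. nxt (r + 2))"
  have tk0: "tk 0 \<ge> 3" using nxt[of 3] by (simp add: tk_def)
  have tkS: "tk (Suc k) \<ge> tk k + 2" for k using nxt[of "tk k + 2"] by (simp add: tk_def)
  have tkK: "K (tk k) > -1" for k
    by (cases k) (use nxt in \<open>auto simp: tk_def\<close>)
  show ?thesis
  proof (intro allI impI)
    fix \<epsilon> :: real assume eps: "\<epsilon> > 0"
    define AK' where "AK' = (LBINT t:{0<..}. \<bar>K t * f t\<bar>)"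
    have AK'0: "AK' \<ge> 0" unfolding AK'_def set_lebesgue_integral_def
      by (rule Bochner_Integration.integral_nonneg) (simp add: indicator_def)
    define C1 where "C1 = 2 * pi * (2 * AK' / \<beta>^2 + 8 * M / \<beta>)"
    have C10: "C1 \<ge> 0" unfolding C1_def using AK'0 beta M by auto
    define \<eta> where "\<eta> = min (min 1 (\<beta>^2/4)) (min (\<epsilon>^2 * \<beta>^4 / (400 * M^2)) (\<epsilon> / (2 * (C1 + 1))))"
    have eta0: "\<eta> > 0" unfolding \<eta>_def using beta M eps C10 by auto
    have eta1: "\<eta> \<le> 1" "\<eta> \<le> \<beta>^2/4" "\<eta> \<le> \<epsilon>^2 * \<beta>^4 / (400 * M^2)" "\<eta> \<le> \<epsilon> / (2 * (C1 + 1))"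
      unfolding \<eta>_def by (meson min.cobounded1 min.cobounded2 order_trans)+
    interpret c: constr f \<beta> \<eta> M x0 tk
      by unfold_locales (use beta eta0 eta1 M x0 tk0 tkS tkK in auto)
    show "\<exists>m :: real \<Rightarrow> real.
           model_surface m \<and> finite_total_curvature m
         \<and> (\<forall>t\<ge>0. radial_curv m t \<ge> radial_curv f t)
         \<and> set_integrable lborel {0..} (\<lambda>t. (radial_curv m t - radial_curv f t)\<^sup>2)
         \<and> sqrt (LBINT t:{0..}. (radial_curv m t - radial_curv f t)\<^sup>2) < \<epsilon>
         \<and> Limsup at_top (\<lambda>t. ereal (radial_curv m t)) = \<infinity>
         \<and> \<bar>total_curvature f - total_curvature m\<bar> < \<epsilon>"
    proof (intro exI conjI allI impI)
      show "model_surface c.m" by (rule c.m_model)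
      show "finite_total_curvature c.m" by (rule c.ftc_m)
      show "radial_curv c.m t \<ge> K t" if "t \<ge> 0" for t using c.rc_ge that by simp
      show "set_integrable lborel {0..} (\<lambda>t. (radial_curv c.m t - K t)\<^sup>2)" by (rule c.L2_int)
      show "Limsup at_top (\<lambda>t. ereal (radial_curv c.m t)) = \<infinity>" by (rule c.limsup_m)
      show "sqrt (LBINT t:{0..}. (radial_curv c.m t - K t)\<^sup>2) < \<epsilon>"
      proof -
        have "(LBINT t:{0..}. (radial_curv c.m t - K t)\<^sup>2) \<le> 192 * M^2 * \<eta> / \<beta>^4" by (rule c.L2_val)
        also have "\<dots> \<le> 192 * M^2 * (\<epsilon>^2 * \<beta>^4 / (400 * M^2)) / \<beta>^4"
          using eta1(3) M beta by (intro divide_right_mono mult_left_mono) auto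
        also have "\<dots> = 192 / 400 * \<epsilon>^2" using M beta by (simp add: field_simps)
        also have "\<dots> < \<epsilon>^2" using eps by simp
        finally have "sqrt (LBINT t:{0..}. (radial_curv c.m t - K t)\<^sup>2) < sqrt (\<epsilon>^2)"
          by (rule real_sqrt_less_mono)
        then show ?thesis using eps by simp
      qed
      show "\<bar>total_curvature f - total_curvature c.m\<bar> < \<epsilon>"
      proof -
        have "\<bar>total_curvature f - total_curvature c.m\<bar> \<le> 2 * pi * (2 * \<eta> / \<beta>^2 * c.AK + 8 * M * \<eta> / \<beta>)"
          by (rule c.tc_bound)
        also have "\<dots> = \<eta> * C1" unfolding C1_def c.AK_def AK'_def by (simp add: field_simps)
        also have "\<dots> \<le> \<epsilon> / (2 * (C1 + 1)) * C1" using eta1(4) C10 by (intro mult_right_mono) auto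
        also have "\<dots> < \<epsilon>"
        proof -
          have "\<epsilon> / (2 * (C1 + 1)) * C1 = \<epsilon> * (C1 / (2 * (C1 + 1)))" by simp
          also have "\<dots> < \<epsilon> * 1" using eps C10 by (intro mult_strict_left_mono) auto
          finally show ?thesis by simp
        qed
        finally show ?thesis .
      qed
    qed
  qed
qed

end
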